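(* Let $n\ge2$, let $X_1,\ldots,X_n$ be i.i.d. $N(\mu_0,\sigma^2)$, $\bar X=\frac1n\sum_iX_i$, $s^2=\frac1{n-1}\sum_i(X_i-\bar X)^2$, $t=\sqrt n(\bar X-\mu_0)/s$, $\nu_1=n-1$, and $U=n\log(1+t^2/\nu_1)$ (so $t$ has a Student $t$ distribution with $\nu_1$ degrees of freedom). Let $\Psi(x)=\Gamma'(x)/\Gamma(x)$ be the digamma function, $D(x)=\Psi\{(x+1)/2\}-\Psi(x/2)$, $m_1=nD(\nu_1)$ and $m_2=n^2\{D^2(\nu_1)-2D'(\nu_1)\}$. Then (a) for any $n\ge2$, $E(U)=m_1$ and $\mathrm{Var}(U)=m_2-m_1^2$; (b) as $n\to\infty$, $E(U)\to1$ and $\mathrm{Var}(U)\to2$.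
   Context: $\Gamma(x)=\int_0^\infty t^{x-1}e^{-t}\,dt$ is the gamma function. *)

theory Defs
  imports "HOL-Probability.Probability"
begin

text \<open>Sample X_1..X_n is represented by X 0, ..., X (n-1).\<close>

definition iid_normal :: "'a measure \<Rightarrow> (nat \<Rightarrow> 'a \<Rightarrow> real) \<Rightarrow> nat \<Rightarrow> real \<Rightarrow> real \<Rightarrow> bool" where
  "iid_normal M X n \<mu>0 \<sigma> \<longleftrightarrow>
     prob_space M \<and> prob_space.indep_vars M (\<lambda>_. borel) X {..<n} \<and>
     (\<forall>i<n. distributed M lborel (X i) (normal_density \<mu>0 \<sigma>))"

definition sample_mean :: "(nat \<Rightarrow> 'a \<Rightarrow> real) \<Rightarrow> nat \<Rightarrow> 'a \<Rightarrow> real" where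
  "sample_mean X n \<omega> = (\<Sum>i<n. X i \<omega>) / real n"

definition sample_var :: "(nat \<Rightarrow> 'a \<Rightarrow> real) \<Rightarrow> nat \<Rightarrow> 'a \<Rightarrow> real" where
  "sample_var X n \<omega> = (\<Sum>i<n. (X i \<omega> - sample_mean X n \<omega>)\<^sup>2) / (real n - 1)"

definition t_stat :: "(nat \<Rightarrow> 'a \<Rightarrow> real) \<Rightarrow> nat \<Rightarrow> real \<Rightarrow> 'a \<Rightarrow> real" where
  "t_stat X n \<mu>0 \<omega> = sqrt (real n) * (sample_mean X n \<omega> - \<mu>0) / sqrt (sample_var X n \<omega>)"

definition U_stat :: "(nat \<Rightarrow> 'a \<Rightarrow> real) \<Rightarrow> nat \<Rightarrow> real \<Rightarrow> 'a \<Rightarrow> real" where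
  "U_stat X n \<mu>0 \<omega> = real n * ln (1 + (t_stat X n \<mu>0 \<omega>)\<^sup>2 / (real n - 1))"

definition Dfun :: "real \<Rightarrow> real" where
  "Dfun x = Digamma ((x + 1) / 2) - Digamma (x / 2)"

definition m1 :: "nat \<Rightarrow> real" where
  "m1 n = real n * Dfun (real n - 1)"

definition m2 :: "nat \<Rightarrow> real" where
  "m2 n = (real n)\<^sup>2 * ((Dfun (real n - 1))\<^sup>2 - 2 * deriv Dfun (real n - 1))"

end

theory Submission
  imports Defs "HOL-Real_Asymp.Real_Asymp"
begin

definition gd :: "real \<Rightarrow> real \<Rightarrow> real" where
  "gd a x = (if 0 < x then x powr (a - 1) * exp (- x / 2) / (2 powr a * Gamma a) else 0)"

lemma gd_nonneg: "0 < a \<Longrightarrow> 0 \<le> gd a x"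
  unfolding gd_def using Gamma_real_pos[of a] by auto

lemma gd_measurable[measurable]: "gd a \<in> borel_measurable borel"
  unfolding gd_def by measurable

lemma gamma_scaled:
  fixes c l :: real
  assumes c: "0 < c" and l: "0 < l"
  shows "(\<integral>\<^sup>+x. ennreal (indicator {0<..} x * x powr (c - 1) * exp (- (l * x))) \<partial>lborel)
         = ennreal (Gamma c / l powr c)"
proof -
  let ?f = "\<lambda>t. ennreal (indicator {0..} t * t powr (c - 1) / exp t)"
  have "ennreal (Gamma c) = (\<integral>\<^sup>+t. ?f t \<partial>lborel)"
    using Gamma_conv_nn_integral_real[OF c] by simp
  also have "\<dots> = ennreal l * (\<integral>\<^sup>+x. ?f (0 + l * x) \<partial>lborel)"
    using l by (subst nn_integral_real_affine[where c=l and t=0]) auto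
  also have "(\<integral>\<^sup>+x. ?f (0 + l * x) \<partial>lborel) =
      (\<integral>\<^sup>+x. ennreal (l powr (c - 1)) * ennreal (indicator {0<..} x * x powr (c - 1) * exp (- (l * x))) \<partial>lborel)"
  proof (intro nn_integral_cong)
    fix x :: real
    show "?f (0 + l * x) = ennreal (l powr (c - 1)) * ennreal (indicator {0<..} x * x powr (c - 1) * exp (- (l * x)))"
      using l by (cases "x > 0") (auto simp: indicator_def powr_mult exp_minus field_simps
          ennreal_mult'[symmetric] zero_le_mult_iff not_less)
  qed
  also have "\<dots> = ennreal (l powr (c - 1)) * (\<integral>\<^sup>+x. ennreal (indicator {0<..} x * x powr (c - 1) * exp (- (l * x))) \<partial>lborel)"
    by (rule nn_integral_cmult) measurable
  finally have eq: "ennreal (Gamma c) = ennreal l * ennreal (l powr (c - 1)) * (\<integral>\<^sup>+x. ennreal (indicator {0<..} x * x powr (c - 1) * exp (- (l * x))) \<partial>lborel)"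
    by (simp add: mult.assoc)
  have lp: "l * l powr (c - 1) = l powr c" using l by (simp add: powr_diff powr_one)
  have pos: "0 < l powr c" using l by simp
  have "ennreal (l powr c) * (\<integral>\<^sup>+x. ennreal (indicator {0<..} x * x powr (c - 1) * exp (- (l * x))) \<partial>lborel) = ennreal (Gamma c)"
    using eq l by (simp add: ennreal_mult'[symmetric] lp)
  then have "ennreal (inverse (l powr c)) * (ennreal (l powr c) * (\<integral>\<^sup>+x. ennreal (indicator {0<..} x * x powr (c - 1) * exp (- (l * x))) \<partial>lborel)) = ennreal (inverse (l powr c)) * ennreal (Gamma c)"
    by simp
  also have "ennreal (inverse (l powr c)) * (ennreal (l powr c) * (\<integral>\<^sup>+x. ennreal (indicator {0<..} x * x powr (c - 1) * exp (- (l * x))) \<partial>lborel))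
     = (ennreal (inverse (l powr c) * l powr c)) * (\<integral>\<^sup>+x. ennreal (indicator {0<..} x * x powr (c - 1) * exp (- (l * x))) \<partial>lborel)"
  proof -
    have "ennreal (inverse (l powr c) * l powr c) = ennreal (inverse (l powr c)) * ennreal (l powr c)"
      by (rule ennreal_mult') (use pos in simp)
    then show ?thesis by (simp only: mult.assoc)
  qed
  also have "ennreal (inverse (l powr c)) * ennreal (Gamma c) = ennreal (Gamma c / l powr c)"
    using pos by (simp add: ennreal_mult'' divide_inverse mult.commute)
  finally have fin: "ennreal (inverse (l powr c) * l powr c) * (\<integral>\<^sup>+x. ennreal (indicator {0<..} x * x powr (c - 1) * exp (- (l * x))) \<partial>lborel) = ennreal (Gamma c / l powr c)" .
  have h1: "inverse (l powr c) * l powr c = 1" using pos by simp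
  from fin show ?thesis by (simp only: h1 ennreal_1 mult_1)
qed

lemma gd_alt: "gd a x = (1 / (2 powr a * Gamma a)) * (indicator {0<..} x * x powr (a - 1) * exp (- ((1/2) * x)))"
  unfolding gd_def by (auto simp: indicator_def)

lemma gd_integral:
  assumes a: "0 < a"
  shows "(\<integral>\<^sup>+x. ennreal (gd a x) \<partial>lborel) = 1"
proof -
  have K: "0 \<le> 1 / (2 powr a * Gamma a)" using Gamma_real_pos[OF a] by simp
  have "(\<integral>\<^sup>+x. ennreal (gd a x) \<partial>lborel) = (\<integral>\<^sup>+x. ennreal (1 / (2 powr a * Gamma a)) * ennreal (indicator {0<..} x * x powr (a - 1) * exp (- ((1/2) * x))) \<partial>lborel)"
    unfolding gd_alt using K by (intro nn_integral_cong) (simp only: ennreal_mult'[symmetric])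
  also have "\<dots> = ennreal (1 / (2 powr a * Gamma a)) * (\<integral>\<^sup>+x. ennreal (indicator {0<..} x * x powr (a - 1) * exp (- ((1/2) * x))) \<partial>lborel)"
    by (rule nn_integral_cmult) measurable
  also have "\<dots> = ennreal (1 / (2 powr a * Gamma a)) * ennreal (Gamma a / (1/2) powr a)"
    using gamma_scaled[OF a, of "1/2"] by simp
  also have "\<dots> = ennreal (1 / (2 powr a * Gamma a) * (Gamma a / (1/2) powr a))"
    using K by (simp only: ennreal_mult'[symmetric])
  also have "1 / (2 powr a * Gamma a) * (Gamma a / (1/2) powr a) = 1"
    using Gamma_real_pos[OF a] by (simp add: powr_divide)
  finally show ?thesis by simp
qed

lemma prob_space_gd: "0 < a \<Longrightarrow> prob_space (density lborel (\<lambda>x. ennreal (gd a x)))"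
  by (rule prob_spaceI) (simp add: emeasure_density_const gd_integral emeasure_density)

definition Chi :: "nat \<Rightarrow> real measure" where
  "Chi m = (if m = 0 then return borel 0 else density lborel (\<lambda>x. ennreal (gd (real m / 2) x)))"

definition Nd :: "real \<Rightarrow> real measure" where
  "Nd s = density lborel (\<lambda>x. ennreal (normal_density 0 s x))"

lemma prob_space_Chi: "prob_space (Chi m)"
  unfolding Chi_def by (auto intro!: prob_space_gd prob_space_return)

lemma sets_Chi[measurable_cong, simp]: "sets (Chi m) = sets borel"
  unfolding Chi_def by auto

lemma space_Chi[simp]: "space (Chi m) = UNIV"
  unfolding Chi_def by auto

lemma prob_space_Nd: "0 < s \<Longrightarrow> prob_space (Nd s)"
  unfolding Nd_def by (rule prob_space_normal_density)

lemma sets_Nd[measurable_cong, simp]: "sets (Nd s) = sets borel"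
  unfolding Nd_def by auto

lemma space_Nd[simp]: "space (Nd s) = UNIV"
  unfolding Nd_def by auto

lemma phi_sq:
  assumes v: "0 < v"
  shows "gd (1/2) (v\<^sup>2) * (2 * v) = 2 * normal_density 0 1 v"
proof -
  have "(v\<^sup>2) powr (1/2 - 1) = inverse v"
  proof -
    have "(v\<^sup>2) powr (1/2 - 1) = (v\<^sup>2) powr (- (1/2))" by simp
    also have "\<dots> = inverse ((v\<^sup>2) powr (1/2))" by (simp add: powr_minus)
    also have "(v\<^sup>2) powr (1/2) = v" using v by (simp add: powr_half_sqrt)
    finally show ?thesis .
  qed
  moreover have "(2::real) powr (1/2) = sqrt 2" by (simp add: powr_half_sqrt)
  moreover have "sqrt (2 * pi) = sqrt 2 * sqrt pi" by (simp add: real_sqrt_mult)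
  ultimately show ?thesis using v unfolding gd_def normal_density_def
    by (simp add: Gamma_one_half_real field_simps)
qed

lemma sq_law: "distr (Nd 1) borel (\<lambda>v. v\<^sup>2) = density lborel (\<lambda>x. ennreal (gd (1/2) x))"
proof (rule cdf_unique)
  interpret N: prob_space "Nd 1" by (rule prob_space_Nd) simp
  show "real_distribution (distr (Nd 1) borel (\<lambda>v. v\<^sup>2))"
    by (rule N.real_distribution_distr) simp
  show "real_distribution (density lborel (\<lambda>x. ennreal (gd (1/2) x)))"
    unfolding real_distribution_def real_distribution_axioms_def
    by (auto intro: prob_space_gd)
  show "cdf (distr (Nd 1) borel (\<lambda>v. v\<^sup>2)) = cdf (density lborel (\<lambda>x. ennreal (gd (1/2) x)))"
  proof
    fix x :: real
    have "emeasure (distr (Nd 1) borel (\<lambda>v. v\<^sup>2)) {..x} = emeasure (density lborel (\<lambda>x. ennreal (gd (1/2) x))) {..x}"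
    proof (cases "x < 0")
      case True
      have "emeasure (distr (Nd 1) borel (\<lambda>v. v\<^sup>2)) {..x} = emeasure (Nd 1) ((\<lambda>v. v\<^sup>2) -` {..x} \<inter> space (Nd 1))"
        by (rule emeasure_distr) auto
      also have "(\<lambda>v. v\<^sup>2) -` {..x} \<inter> space (Nd 1) = {}"
      proof -
        have "\<not> v\<^sup>2 \<le> x" for v :: real using True zero_le_power2[of v] by linarith
        then show ?thesis by auto
      qed
      also have "emeasure (Nd 1) {} = 0" by simp
      also have "0 = (\<integral>\<^sup>+y. ennreal (gd (1/2) y) * indicator {..x} y \<partial>lborel)"
        using True by (intro sym[OF nn_integral_zero'] AE_I2) (auto simp: gd_def indicator_def)
      also have "\<dots> = emeasure (density lborel (\<lambda>x. ennreal (gd (1/2) x))) {..x}"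
        by (simp add: emeasure_density)
      finally show ?thesis .
    next
      case False
      define r where "r = sqrt x"
      have r: "0 \<le> r" "r\<^sup>2 = x" using False by (auto simp: r_def)
      let ?phi = "\<lambda>v. normal_density 0 1 v"
      have "emeasure (distr (Nd 1) borel (\<lambda>v. v\<^sup>2)) {..x} = (\<integral>\<^sup>+v. ennreal (?phi v) * indicator {v. v\<^sup>2 \<le> x} v \<partial>lborel)"
      proof -
        have "emeasure (distr (Nd 1) borel (\<lambda>v. v\<^sup>2)) {..x} = emeasure (Nd 1) ((\<lambda>v. v\<^sup>2) -` {..x} \<inter> space (Nd 1))"
          by (rule emeasure_distr) auto
        also have "(\<lambda>v. v\<^sup>2) -` {..x} \<inter> space (Nd 1) = {v. v\<^sup>2 \<le> x}" by auto
        also have "emeasure (Nd 1) {v. v\<^sup>2 \<le> x} = (\<integral>\<^sup>+v. ennreal (?phi v) * indicator {v. v\<^sup>2 \<le> x} v \<partial>lborel)"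
          unfolding Nd_def by (subst emeasure_density) auto
        finally show ?thesis .
      qed
      also have "\<dots> = (\<integral>\<^sup>+v. ennreal (?phi v * indicator {0<..r} v) + ennreal (?phi (0 + -1 * v) * indicator {0..r} (0 + -1 * v)) \<partial>lborel)"
      proof (rule nn_integral_cong)
        fix v :: real
        have iff1: "0 < v \<Longrightarrow> v\<^sup>2 \<le> x \<longleftrightarrow> v \<le> r"
          using r by (metis less_imp_le power2_le_iff_abs_le abs_of_nonneg)
        have iff2: "v \<le> 0 \<Longrightarrow> v\<^sup>2 \<le> x \<longleftrightarrow> -v \<le> r"
          using r by (metis abs_of_nonpos power2_le_iff_abs_le)
        show "ennreal (?phi v) * indicator {v. v\<^sup>2 \<le> x} v = ennreal (?phi v * indicator {0<..r} v) + ennreal (?phi (0 + -1 * v) * indicator {0..r} (0 + -1 * v))"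
          using iff1 iff2 by (cases "0 < v") (auto simp: indicator_def normal_density_def)
      qed
      also have "\<dots> = (\<integral>\<^sup>+v. ennreal (?phi v * indicator {0<..r} v) \<partial>lborel) + (\<integral>\<^sup>+v. ennreal (?phi (0 + -1 * v) * indicator {0..r} (0 + -1 * v)) \<partial>lborel)"
        by (rule nn_integral_add) auto
      also have "(\<integral>\<^sup>+v. ennreal (?phi (0 + -1 * v) * indicator {0..r} (0 + -1 * v)) \<partial>lborel) = (\<integral>\<^sup>+v. ennreal (?phi v * indicator {0..r} v) \<partial>lborel)"
        using nn_integral_real_affine[of "\<lambda>v. ennreal (?phi v * indicator {0..r} v)" "-1" 0] by simp
      also have "\<dots> = (\<integral>\<^sup>+v. ennreal (?phi v * indicator {0<..r} v) \<partial>lborel)"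
        by (rule nn_integral_cong_AE) (use AE_lborel_singleton[of 0] in \<open>auto simp: indicator_def\<close>)
      also have "(\<integral>\<^sup>+v. ennreal (?phi v * indicator {0<..r} v) \<partial>lborel) + (\<integral>\<^sup>+v. ennreal (?phi v * indicator {0<..r} v) \<partial>lborel)
          = (\<integral>\<^sup>+v. ennreal (gd (1/2) (v\<^sup>2) * (2 * v) * indicator {0..r} v) \<partial>lborel)"
      proof -
        have "(\<integral>\<^sup>+v. ennreal (gd (1/2) (v\<^sup>2) * (2 * v) * indicator {0..r} v) \<partial>lborel)
            = (\<integral>\<^sup>+v. ennreal 2 * ennreal (?phi v * indicator {0<..r} v) \<partial>lborel)"
        proof (rule nn_integral_cong)
          fix v :: real
          show "ennreal (gd (1/2) (v\<^sup>2) * (2 * v) * indicator {0..r} v) = ennreal 2 * ennreal (?phi v * indicator {0<..r} v)"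
          proof (cases "0 < v \<and> v \<le> r")
            case True
            then have e: "gd (1/2) (v\<^sup>2) * (2 * v) * indicator {0..r} v = 2 * (?phi v * indicator {0<..r} v)"
              using phi_sq[of v] by (simp add: indicator_def)
            show ?thesis by (subst e, rule ennreal_mult') simp
          next
            case False
            then show ?thesis by (cases "v = 0") (auto simp: indicator_def gd_def)
          qed
        qed
        also have "\<dots> = ennreal 2 * (\<integral>\<^sup>+v. ennreal (?phi v * indicator {0<..r} v) \<partial>lborel)"
          by (rule nn_integral_cmult) auto
        finally have f2: "(\<integral>\<^sup>+v. ennreal (gd (1/2) (v\<^sup>2) * (2 * v) * indicator {0..r} v) \<partial>lborel) = ennreal 2 * (\<integral>\<^sup>+v. ennreal (?phi v * indicator {0<..r} v) \<partial>lborel)" .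
        have two: "\<And>X::ennreal. ennreal 2 * X = X + X" by (simp add: mult_2)
        show ?thesis unfolding f2 two ..
      qed
      also have "\<dots> = (\<integral>\<^sup>+y. ennreal (gd (1/2) y * indicator {0\<^sup>2..r\<^sup>2} y) \<partial>lborel)"
        by (rule nn_integral_substitution[symmetric, where g'="\<lambda>v. 2 * v"])
           (auto intro!: derivative_eq_intros continuous_intros simp: r set_borel_measurable_def)
      also have "\<dots> = (\<integral>\<^sup>+y. ennreal (gd (1/2) y) * indicator {..x} y \<partial>lborel)"
        using r by (intro nn_integral_cong) (auto simp: indicator_def gd_def)
      also have "\<dots> = emeasure (density lborel (\<lambda>x. ennreal (gd (1/2) x))) {..x}"
        by (simp add: emeasure_density)
      finally show ?thesis .
    qed
    then show "cdf (distr (Nd 1) borel (\<lambda>v. v\<^sup>2)) x = cdf (density lborel (\<lambda>x. ennreal (gd (1/2) x))) x"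
      unfolding cdf_def measure_def by simp
  qed
qed

lemma sq_nn:
  assumes [measurable]: "H \<in> borel_measurable borel"
  shows "(\<integral>\<^sup>+v. H (v\<^sup>2) \<partial>Nd 1) = (\<integral>\<^sup>+y. H y \<partial>Chi 1)"
proof -
  have "(\<integral>\<^sup>+v. H (v\<^sup>2) \<partial>Nd 1) = (\<integral>\<^sup>+y. H y \<partial>distr (Nd 1) borel (\<lambda>v. v\<^sup>2))"
    by (subst nn_integral_distr) auto
  also have "\<dots> = (\<integral>\<^sup>+y. H y \<partial>Chi 1)"
    unfolding sq_law Chi_def by simp
  finally show ?thesis .
qed

lemma rot_expo:
  fixes a b u v z :: real
  assumes a: "0 < a" and b: "0 < b" and bb: "b\<^sup>2 = a\<^sup>2 + 1" and zz: "z = (u + a * b * v) / b\<^sup>2"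
  shows "(u - z)\<^sup>2 / (2 * a\<^sup>2) + z\<^sup>2 / 2 = u\<^sup>2 / (2 * b\<^sup>2) + v\<^sup>2 / 2"
proof -
  have uz: "u - z = (a * a * u - a * b * v) / b\<^sup>2"
    unfolding zz using b bb
    apply (simp add: divide_simps)
    apply (simp add: algebra_simps power2_eq_square)
    using zero_le_square[of a] by linarith
  have 1: "(u - z)\<^sup>2 / (2 * a\<^sup>2) = (a * u - b * v)\<^sup>2 / (2 * b\<^sup>2 * b\<^sup>2)"
    unfolding uz using a b by (simp add: power_divide power_mult_distrib power2_eq_square field_simps)
  have 2: "z\<^sup>2 / 2 = (u + a * b * v)\<^sup>2 / (2 * b\<^sup>2 * b\<^sup>2)"
    unfolding zz using b by (simp add: power_divide field_simps power2_eq_square)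
  have "(u - z)\<^sup>2 / (2 * a\<^sup>2) + z\<^sup>2 / 2 = ((a * u - b * v)\<^sup>2 + (u + a * b * v)\<^sup>2) / (2 * b\<^sup>2 * b\<^sup>2)"
    unfolding 1 2 by (simp add: add_divide_distrib)
  also have "(a * u - b * v)\<^sup>2 + (u + a * b * v)\<^sup>2 = b\<^sup>2 * (u\<^sup>2 + b\<^sup>2 * v\<^sup>2)"
  proof -
    have "(a * u - b * v)\<^sup>2 + (u + a * b * v)\<^sup>2 = (a\<^sup>2 + 1) * u\<^sup>2 + b\<^sup>2 * (1 + a\<^sup>2) * v\<^sup>2"
      by (simp add: power2_eq_square algebra_simps)
    then show ?thesis using bb by (simp add: algebra_simps)
  qed
  also have "b\<^sup>2 * (u\<^sup>2 + b\<^sup>2 * v\<^sup>2) / (2 * b\<^sup>2 * b\<^sup>2) = u\<^sup>2 / (2 * b\<^sup>2) + v\<^sup>2 / 2"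
    using b by (simp add: field_simps power2_eq_square)
  finally show ?thesis .
qed

lemma rot_density_ab:
  fixes a b u v z :: real
  assumes a: "0 < a" and b: "0 < b" and bb: "b\<^sup>2 = a\<^sup>2 + 1" and zz: "z = (u + a * b * v) / b\<^sup>2"
  shows "(a * b / b\<^sup>2) * (normal_density 0 a (u - z) * normal_density 0 1 z)
       = normal_density 0 b u * normal_density 0 1 v"
proof -
  have L: "(a * b / b\<^sup>2) * (normal_density 0 a (u - z) * normal_density 0 1 z)
       = (a * b / b\<^sup>2) / (sqrt (2 * pi) * a * sqrt (2 * pi)) * exp (- ((u - z)\<^sup>2 / (2 * a\<^sup>2) + z\<^sup>2 / 2))"
    unfolding normal_density_def using a
    by (simp add: real_sqrt_mult exp_add[symmetric] exp_minus field_simps)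
  have R: "normal_density 0 b u * normal_density 0 1 v
       = 1 / (sqrt (2 * pi) * b * sqrt (2 * pi)) * exp (- (u\<^sup>2 / (2 * b\<^sup>2) + v\<^sup>2 / 2))"
    unfolding normal_density_def using b
    by (simp add: real_sqrt_mult exp_add[symmetric] exp_minus field_simps)
  show ?thesis unfolding L R rot_expo[OF a b bb zz] using a b by (simp add: field_simps power2_eq_square)
qed

lemma nn_Nd:
  assumes [measurable]: "f \<in> borel_measurable borel"
  shows "(\<integral>\<^sup>+x. f x \<partial>Nd s) = (\<integral>\<^sup>+x. ennreal (normal_density 0 s x) * f x \<partial>lborel)"
  unfolding Nd_def by (subst nn_integral_density) auto

lemma rot_nn:
  fixes a b :: real
  assumes a: "0 < a" and b: "0 < b" and bb: "b\<^sup>2 = a\<^sup>2 + 1"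
  assumes [measurable]: "(\<lambda>(x, y). h x y) \<in> borel_measurable (borel \<Otimes>\<^sub>M borel)"
  shows "(\<integral>\<^sup>+t. \<integral>\<^sup>+z. h (t + z) ((a\<^sup>2 * z - t) / (a * b)) \<partial>Nd 1 \<partial>Nd a) = (\<integral>\<^sup>+u. \<integral>\<^sup>+v. h u v \<partial>Nd 1 \<partial>Nd b)"
proof -
  let ?pa = "\<lambda>x. ennreal (normal_density 0 a x)"
  let ?pb = "\<lambda>x. ennreal (normal_density 0 b x)"
  let ?p1 = "\<lambda>x. ennreal (normal_density 0 1 x)"
  have "(\<integral>\<^sup>+t. \<integral>\<^sup>+z. h (t + z) ((a\<^sup>2 * z - t) / (a * b)) \<partial>Nd 1 \<partial>Nd a)
      = (\<integral>\<^sup>+t. ?pa t * (\<integral>\<^sup>+z. ?p1 z * h (t + z) ((a\<^sup>2 * z - t) / (a * b)) \<partial>lborel) \<partial>lborel)"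
    by (subst nn_Nd, measurable) (simp add: nn_Nd)
  also have "\<dots> = (\<integral>\<^sup>+t. \<integral>\<^sup>+z. ?pa t * ?p1 z * h (t + z) ((a\<^sup>2 * z - t) / (a * b)) \<partial>lborel \<partial>lborel)"
    by (intro nn_integral_cong) (simp add: nn_integral_cmult[symmetric] mult.assoc)
  also have "\<dots> = (\<integral>\<^sup>+z. \<integral>\<^sup>+t. ?pa t * ?p1 z * h (t + z) ((a\<^sup>2 * z - t) / (a * b)) \<partial>lborel \<partial>lborel)"
    by (rule lborel_pair.Fubini'[symmetric]) measurable
  also have "\<dots> = (\<integral>\<^sup>+z. \<integral>\<^sup>+u. ?pa (u - z) * ?p1 z * h u ((b\<^sup>2 * z - u) / (a * b)) \<partial>lborel \<partial>lborel)"
  proof (rule nn_integral_cong)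
    fix z :: real
    have "(\<integral>\<^sup>+t. ?pa t * ?p1 z * h (t + z) ((a\<^sup>2 * z - t) / (a * b)) \<partial>lborel)
        = ennreal \<bar>1\<bar> * (\<integral>\<^sup>+u. ?pa (-z + 1 * u) * ?p1 z * h ((-z + 1 * u) + z) ((a\<^sup>2 * z - (-z + 1 * u)) / (a * b)) \<partial>lborel)"
      by (rule nn_integral_real_affine) measurable
    also have "\<dots> = (\<integral>\<^sup>+u. ?pa (u - z) * ?p1 z * h u ((b\<^sup>2 * z - u) / (a * b)) \<partial>lborel)"
      using bb by (simp add: algebra_simps)
    finally show "(\<integral>\<^sup>+t. ?pa t * ?p1 z * h (t + z) ((a\<^sup>2 * z - t) / (a * b)) \<partial>lborel)
        = (\<integral>\<^sup>+u. ?pa (u - z) * ?p1 z * h u ((b\<^sup>2 * z - u) / (a * b)) \<partial>lborel)" .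
  qed
  also have "\<dots> = (\<integral>\<^sup>+u. \<integral>\<^sup>+z. ?pa (u - z) * ?p1 z * h u ((b\<^sup>2 * z - u) / (a * b)) \<partial>lborel \<partial>lborel)"
    by (rule lborel_pair.Fubini') measurable
  also have "\<dots> = (\<integral>\<^sup>+u. \<integral>\<^sup>+v. ?pb u * ?p1 v * h u v \<partial>lborel \<partial>lborel)"
  proof (rule nn_integral_cong)
    fix u :: real
    have ab: "a * b / b\<^sup>2 \<noteq> 0" using a b by simp
    have "(\<integral>\<^sup>+z. ?pa (u - z) * ?p1 z * h u ((b\<^sup>2 * z - u) / (a * b)) \<partial>lborel)
       = ennreal \<bar>a * b / b\<^sup>2\<bar> * (\<integral>\<^sup>+v. ?pa (u - (u / b\<^sup>2 + a * b / b\<^sup>2 * v)) * ?p1 (u / b\<^sup>2 + a * b / b\<^sup>2 * v)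
            * h u ((b\<^sup>2 * (u / b\<^sup>2 + a * b / b\<^sup>2 * v) - u) / (a * b)) \<partial>lborel)"
      using ab by (rule nn_integral_real_affine[rotated]) measurable
    also have "\<dots> = (\<integral>\<^sup>+v. ennreal (a * b / b\<^sup>2) * (?pa (u - (u / b\<^sup>2 + a * b / b\<^sup>2 * v)) * ?p1 (u / b\<^sup>2 + a * b / b\<^sup>2 * v))
            * h u ((b\<^sup>2 * (u / b\<^sup>2 + a * b / b\<^sup>2 * v) - u) / (a * b)) \<partial>lborel)"
      using a b by (subst nn_integral_cmult[symmetric]) (measurable, simp add: mult.assoc)
    also have "\<dots> = (\<integral>\<^sup>+v. ?pb u * ?p1 v * h u v \<partial>lborel)"
    proof (rule nn_integral_cong)
      fix v :: real
      define z where "z = (u + a * b * v) / b\<^sup>2"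
      have z: "u / b\<^sup>2 + a * b / b\<^sup>2 * v = z" unfolding z_def by (simp add: add_divide_distrib)
      have hv: "(b\<^sup>2 * z - u) / (a * b) = v" unfolding z_def using a b by (simp add: field_simps)
      have d: "ennreal (a * b / b\<^sup>2) * (?pa (u - z) * ?p1 z) = ?pb u * ?p1 v"
        using rot_density_ab[OF a b bb z_def] a b by (simp add: ennreal_mult'[symmetric])
      show "ennreal (a * b / b\<^sup>2) * (?pa (u - (u / b\<^sup>2 + a * b / b\<^sup>2 * v)) * ?p1 (u / b\<^sup>2 + a * b / b\<^sup>2 * v))
            * h u ((b\<^sup>2 * (u / b\<^sup>2 + a * b / b\<^sup>2 * v) - u) / (a * b)) = ?pb u * ?p1 v * h u v"
        unfolding z hv d ..
    qed
    finally show "(\<integral>\<^sup>+z. ?pa (u - z) * ?p1 z * h u ((b\<^sup>2 * z - u) / (a * b)) \<partial>lborel) = (\<integral>\<^sup>+v. ?pb u * ?p1 v * h u v \<partial>lborel)" .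
  qed
  also have "\<dots> = (\<integral>\<^sup>+u. ?pb u * (\<integral>\<^sup>+v. ?p1 v * h u v \<partial>lborel) \<partial>lborel)"
    by (intro nn_integral_cong) (simp add: nn_integral_cmult[symmetric] mult.assoc)
  also have "\<dots> = (\<integral>\<^sup>+u. \<integral>\<^sup>+v. h u v \<partial>Nd 1 \<partial>Nd b)"
    by (subst nn_Nd, measurable) (simp add: nn_Nd)
  finally show ?thesis .
qed

lemma gd_conv_pt:
  fixes a b r s :: real
  assumes a: "0 < a" and b: "0 < b" and r: "0 < r"
  shows "gd a (r - (0 + r * s)) * gd b (0 + r * s) =
     (r powr (a + b - 2) * exp (- r / 2) / (2 powr a * Gamma a * (2 powr b * Gamma b))) *
     (indicator {0..1} s * (s powr (b - 1) * (1 - s) powr (a - 1)))"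
proof (cases "0 < s \<and> s < 1")
  case True
  then have s: "0 < s" "s < 1" by auto
  have e1: "(r - r * s) powr (a - 1) = r powr (a - 1) * (1 - s) powr (a - 1)"
    using r s by (simp add: powr_mult[symmetric] algebra_simps)
  have e2: "(r * s) powr (b - 1) = r powr (b - 1) * s powr (b - 1)"
    using r s by (simp add: powr_mult)
  have e3: "r powr (a - 1) * r powr (b - 1) = r powr (a + b - 2)"
    using r by (simp add: powr_add[symmetric])
  have e4: "exp (- (r - r * s) / 2) * exp (- (r * s) / 2) = exp (- r / 2)"
    by (simp add: exp_add[symmetric] field_simps)
  have "gd a (r - (0 + r * s)) * gd b (0 + r * s) =
     ((r - r * s) powr (a - 1) * (r * s) powr (b - 1)) * (exp (- (r - r * s) / 2) * exp (- (r * s) / 2)) / (2 powr a * Gamma a * (2 powr b * Gamma b))"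
    using r s by (simp add: gd_def mult_less_cancel_left1)
  also have "\<dots> = (r powr (a + b - 2) * exp (- r / 2) / (2 powr a * Gamma a * (2 powr b * Gamma b))) *
     (indicator {0..1} s * (s powr (b - 1) * (1 - s) powr (a - 1)))"
    unfolding e1 e2 e4 using s e3[symmetric] by (simp add: indicator_def field_simps)
  finally show ?thesis .
next
  case False
  then have "s \<le> 0 \<or> 1 \<le> s" by auto
  then show ?thesis
  proof
    assume s: "s \<le> 0"
    then have "\<not> 0 < r * s" using r by (simp add: mult_le_0_iff not_less)
    moreover have "indicator {0..1} s * (s powr (b - 1) * (1 - s) powr (a - 1)) = 0"
      using s by (cases "s = 0") (auto simp: indicator_def)
    ultimately show ?thesis by (simp add: gd_def)
  next
    assume s: "1 \<le> s"
    then have "\<not> 0 < r - r * s" using r by (simp add: not_less algebra_simps)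
    moreover have "indicator {0..1} s * (s powr (b - 1) * (1 - s) powr (a - 1)) = 0"
      using s by (cases "s = 1") (auto simp: indicator_def)
    ultimately show ?thesis by (simp add: gd_def)
  qed
qed

lemma gd_conv:
  fixes a b r :: real
  assumes a: "0 < a" and b: "0 < b"
  shows "(\<integral>\<^sup>+y. ennreal (gd a (r - y) * gd b y) \<partial>lborel) = ennreal (gd (a + b) r)"
proof (cases "0 < r")
  case False
  have "(\<integral>\<^sup>+y. ennreal (gd a (r - y) * gd b y) \<partial>lborel) = 0"
    using False by (intro nn_integral_zero' AE_I2) (auto simp: gd_def)
  then show ?thesis using False by (simp add: gd_def)
next
  case True
  note r = True
  define K where "K = r powr (a + b - 2) * exp (- r / 2) / (2 powr a * Gamma a * (2 powr b * Gamma b))"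
  have K: "0 \<le> K" unfolding K_def using Gamma_real_pos[OF a] Gamma_real_pos[OF b] by simp
  have "(\<integral>\<^sup>+y. ennreal (gd a (r - y) * gd b y) \<partial>lborel)
      = ennreal \<bar>r\<bar> * (\<integral>\<^sup>+s. ennreal (gd a (r - (0 + r * s)) * gd b (0 + r * s)) \<partial>lborel)"
    using r by (intro nn_integral_real_affine) auto
  also have "(\<integral>\<^sup>+s. ennreal (gd a (r - (0 + r * s)) * gd b (0 + r * s)) \<partial>lborel)
      = (\<integral>\<^sup>+s. ennreal K * ennreal (indicator {0..1} s * (s powr (b - 1) * (1 - s) powr (a - 1))) \<partial>lborel)"
    unfolding gd_conv_pt[OF a b r] K_def[symmetric] using K by (intro nn_integral_cong) (simp add: ennreal_mult')
  also have "\<dots> = ennreal K * (\<integral>\<^sup>+s. ennreal (indicator {0..1} s * (s powr (b - 1) * (1 - s) powr (a - 1))) \<partial>lborel)"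
    by (rule nn_integral_cmult) auto
  also have "(\<integral>\<^sup>+s. ennreal (indicator {0..1} s * (s powr (b - 1) * (1 - s) powr (a - 1))) \<partial>lborel) = ennreal (Beta b a)"
    by (rule nn_integral_has_integral_lebesgue) (auto intro: has_integral_Beta_real[OF b a])
  also have "ennreal \<bar>r\<bar> * (ennreal K * ennreal (Beta b a)) = ennreal (r * K * Beta b a)"
    using r K by (simp add: ennreal_mult'[symmetric] mult.assoc)
  also have "r * K * Beta b a = gd (a + b) r"
  proof -
    have "r powr (a + b - 1) = r powr (1 + (a + b - 2))"
      by (rule arg_cong[where f="\<lambda>x. r powr x"]) simp
    also have "\<dots> = r powr 1 * r powr (a + b - 2)" by (rule powr_add)
    also have "\<dots> = r * r powr (a + b - 2)" using r by simp
    finally have "r * r powr (a + b - 2) = r powr (a + b - 1)" by simp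
    moreover have "(2::real) powr a * 2 powr b = 2 powr (a + b)" by (simp add: powr_add)
    moreover have "Gamma a \<noteq> 0" "Gamma b \<noteq> 0" "Gamma (a + b) \<noteq> 0"
      using Gamma_real_pos[OF a] Gamma_real_pos[OF b] Gamma_real_pos[of "a+b"] a b by (smt (verit))+
    ultimately show ?thesis
      using r unfolding K_def Beta_def gd_def by (simp add: field_simps)
  qed
  finally show ?thesis .
qed

lemma sigma_finite_Chi: "sigma_finite_measure (Chi m)"
  using prob_space_Chi[of m] by (rule prob_space_imp_sigma_finite)

lemma sigma_finite_Nd: "0 < s \<Longrightarrow> sigma_finite_measure (Nd s)"
  using prob_space_Nd[of s] by (intro prob_space_imp_sigma_finite)

lemma chi_conv:
  assumes [measurable]: "H \<in> borel_measurable borel"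
  shows "(\<integral>\<^sup>+q. \<integral>\<^sup>+v. H (q + v\<^sup>2) \<partial>Nd 1 \<partial>Chi m) = (\<integral>\<^sup>+r. H r \<partial>Chi (Suc m))"
proof -
  have inner: "(\<integral>\<^sup>+v. H (q + v\<^sup>2) \<partial>Nd 1) = (\<integral>\<^sup>+y. H (q + y) \<partial>Chi 1)" for q
    by (rule sq_nn) measurable
  have "(\<integral>\<^sup>+q. \<integral>\<^sup>+v. H (q + v\<^sup>2) \<partial>Nd 1 \<partial>Chi m) = (\<integral>\<^sup>+q. \<integral>\<^sup>+y. H (q + y) \<partial>Chi 1 \<partial>Chi m)"
    by (simp add: inner)
  also have "\<dots> = (\<integral>\<^sup>+r. H r \<partial>Chi (Suc m))"
  proof (cases "m = 0")
    case True
    have meas: "(\<lambda>q. \<integral>\<^sup>+y. H (q + y) \<partial>Chi 1) \<in> borel_measurable borel"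
      using sigma_finite_measure.borel_measurable_nn_integral_fst[OF sigma_finite_Chi[of 1], of "\<lambda>(q, y). H (q + y)" borel]
      by simp
    have "(\<integral>\<^sup>+q. \<integral>\<^sup>+y. H (q + y) \<partial>Chi 1 \<partial>Chi m) = (\<integral>\<^sup>+y. H (0 + y) \<partial>Chi 1)"
    proof -
      have C0: "Chi 0 = return borel 0" by (simp add: Chi_def)
      show ?thesis unfolding True C0 using meas by (subst nn_integral_return) auto
    qed
    then show ?thesis using True by simp
  next
    case False
    define A where "A = real m / 2"
    have A: "0 < A" using False by (simp add: A_def)
    have B: "(0::real) < 1 / 2" by simp
    have CS: "Chi (Suc m) = density lborel (\<lambda>x. ennreal (gd (A + 1 / 2) x))"
      unfolding Chi_def A_def by (simp add: add_divide_distrib add.commute)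
    have C1: "Chi 1 = density lborel (\<lambda>x. ennreal (gd (1 / 2) x))"
      unfolding Chi_def by simp
    have Cm: "Chi m = density lborel (\<lambda>x. ennreal (gd A x))"
      unfolding Chi_def A_def using False by simp
    have "(\<integral>\<^sup>+q. \<integral>\<^sup>+y. H (q + y) \<partial>Chi 1 \<partial>Chi m)
        = (\<integral>\<^sup>+q. ennreal (gd A q) * (\<integral>\<^sup>+y. ennreal (gd (1/2) y) * H (q + y) \<partial>lborel) \<partial>lborel)"
    proof -
      have in1: "(\<integral>\<^sup>+y. H (q + y) \<partial>Chi 1) = (\<integral>\<^sup>+y. ennreal (gd (1/2) y) * H (q + y) \<partial>lborel)" for q
        unfolding C1 by (rule nn_integral_density) measurable
      have "(\<integral>\<^sup>+q. \<integral>\<^sup>+y. H (q + y) \<partial>Chi 1 \<partial>Chi m) = (\<integral>\<^sup>+q. \<integral>\<^sup>+y. ennreal (gd (1/2) y) * H (q + y) \<partial>lborel \<partial>Chi m)"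
        by (simp only: in1)
      also have "\<dots> = (\<integral>\<^sup>+q. ennreal (gd A q) * (\<integral>\<^sup>+y. ennreal (gd (1/2) y) * H (q + y) \<partial>lborel) \<partial>lborel)"
        unfolding Cm by (rule nn_integral_density) measurable
      finally show ?thesis .
    qed
    also have "\<dots> = (\<integral>\<^sup>+q. \<integral>\<^sup>+y. ennreal (gd A q) * ennreal (gd (1/2) y) * H (q + y) \<partial>lborel \<partial>lborel)"
      by (rule nn_integral_cong) (simp add: nn_integral_cmult[symmetric] mult.assoc)
    also have "\<dots> = (\<integral>\<^sup>+y. \<integral>\<^sup>+q. ennreal (gd A q) * ennreal (gd (1/2) y) * H (q + y) \<partial>lborel \<partial>lborel)"
      by (rule lborel_pair.Fubini'[symmetric]) measurable
    also have "\<dots> = (\<integral>\<^sup>+y. \<integral>\<^sup>+r. ennreal (gd A (r - y)) * ennreal (gd (1/2) y) * H r \<partial>lborel \<partial>lborel)"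
    proof (rule nn_integral_cong)
      fix y :: real
      have "(\<integral>\<^sup>+q. ennreal (gd A q) * ennreal (gd (1/2) y) * H (q + y) \<partial>lborel)
          = ennreal \<bar>1\<bar> * (\<integral>\<^sup>+r. ennreal (gd A (-y + 1 * r)) * ennreal (gd (1/2) y) * H ((-y + 1 * r) + y) \<partial>lborel)"
        by (rule nn_integral_real_affine) measurable
      then show "(\<integral>\<^sup>+q. ennreal (gd A q) * ennreal (gd (1/2) y) * H (q + y) \<partial>lborel)
          = (\<integral>\<^sup>+r. ennreal (gd A (r - y)) * ennreal (gd (1/2) y) * H r \<partial>lborel)" by simp
    qed
    also have "\<dots> = (\<integral>\<^sup>+r. \<integral>\<^sup>+y. ennreal (gd A (r - y)) * ennreal (gd (1/2) y) * H r \<partial>lborel \<partial>lborel)"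
      by (rule lborel_pair.Fubini') measurable
    also have "\<dots> = (\<integral>\<^sup>+r. ennreal (gd (A + 1/2) r) * H r \<partial>lborel)"
    proof (rule nn_integral_cong)
      fix r :: real
      have "(\<integral>\<^sup>+y. ennreal (gd A (r - y)) * ennreal (gd (1/2) y) * H r \<partial>lborel)
          = (\<integral>\<^sup>+y. ennreal (gd A (r - y) * gd (1/2) y) \<partial>lborel) * H r"
        using A by (simp add: nn_integral_multc ennreal_mult' gd_nonneg)
      also have "\<dots> = ennreal (gd (A + 1/2) r) * H r"
        using gd_conv[OF A B] by simp
      finally show "(\<integral>\<^sup>+y. ennreal (gd A (r - y)) * ennreal (gd (1/2) y) * H r \<partial>lborel) = ennreal (gd (A + 1/2) r) * H r" .
    qed
    also have "\<dots> = (\<integral>\<^sup>+r. H r \<partial>Chi (Suc m))"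
      unfolding CS by (subst nn_integral_density) auto
    finally show ?thesis .
  qed
  finally show ?thesis .
qed

lemma std_nn:
  fixes \<mu> \<sigma> :: real
  assumes s: "0 < \<sigma>" and [measurable]: "G \<in> borel_measurable borel"
  shows "(\<integral>\<^sup>+y. G ((y - \<mu>) / \<sigma>) \<partial>density lborel (\<lambda>x. ennreal (normal_density \<mu> \<sigma> x))) = (\<integral>\<^sup>+z. G z \<partial>Nd 1)"
proof -
  have "(\<integral>\<^sup>+y. G ((y - \<mu>) / \<sigma>) \<partial>density lborel (\<lambda>x. ennreal (normal_density \<mu> \<sigma> x)))
      = (\<integral>\<^sup>+y. ennreal (normal_density \<mu> \<sigma> y) * G ((y - \<mu>) / \<sigma>) \<partial>lborel)"
    by (subst nn_integral_density) auto
  also have "\<dots> = ennreal \<bar>\<sigma>\<bar> * (\<integral>\<^sup>+z. ennreal (normal_density \<mu> \<sigma> (\<mu> + \<sigma> * z)) * G (((\<mu> + \<sigma> * z) - \<mu>) / \<sigma>) \<partial>lborel)"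
    using s by (intro nn_integral_real_affine) auto
  also have "\<dots> = (\<integral>\<^sup>+z. ennreal (\<sigma> * normal_density \<mu> \<sigma> (\<mu> + \<sigma> * z)) * G z \<partial>lborel)"
    using s by (subst nn_integral_cmult[symmetric]) (auto simp: ennreal_mult' mult.assoc)
  also have "\<dots> = (\<integral>\<^sup>+z. ennreal (normal_density 0 1 z) * G z \<partial>lborel)"
  proof (rule nn_integral_cong)
    fix z :: real
    have "\<sigma> * normal_density \<mu> \<sigma> (\<mu> + \<sigma> * z) = normal_density 0 1 z"
      using s unfolding normal_density_def
      by (simp add: real_sqrt_mult power_mult_distrib field_simps)
    then show "ennreal (\<sigma> * normal_density \<mu> \<sigma> (\<mu> + \<sigma> * z)) * G z = ennreal (normal_density 0 1 z) * G z" by simp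
  qed
  also have "\<dots> = (\<integral>\<^sup>+z. G z \<partial>Nd 1)"
    by (simp add: nn_Nd)
  finally show ?thesis .
qed

definition NM :: "real \<Rightarrow> real \<Rightarrow> real measure" where
  "NM \<mu> \<sigma> = density lborel (\<lambda>x. ennreal (normal_density \<mu> \<sigma> x))"

definition Tz :: "real \<Rightarrow> real \<Rightarrow> nat \<Rightarrow> (nat \<Rightarrow> real) \<Rightarrow> real" where
  "Tz \<mu> \<sigma> k x = (\<Sum>i<k. (x i - \<mu>) / \<sigma>)"

definition Qz :: "real \<Rightarrow> real \<Rightarrow> nat \<Rightarrow> (nat \<Rightarrow> real) \<Rightarrow> real" where
  "Qz \<mu> \<sigma> k x = (\<Sum>i<k. ((x i - \<mu>) / \<sigma>)\<^sup>2) - (Tz \<mu> \<sigma> k x)\<^sup>2 / real k"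

lemma sets_NM[measurable_cong, simp]: "sets (NM \<mu> \<sigma>) = sets borel"
  unfolding NM_def by simp

lemma space_NM[simp]: "space (NM \<mu> \<sigma>) = UNIV"
  unfolding NM_def by simp

lemma prob_space_NM: "0 < \<sigma> \<Longrightarrow> prob_space (NM \<mu> \<sigma>)"
  unfolding NM_def by (rule prob_space_normal_density)

lemma alg1:
  fixes K S T z :: real
  assumes K: "0 < K"
  shows "S + z\<^sup>2 - (T + z)\<^sup>2 / (K + 1) = S - T\<^sup>2 / K + (K * z - T)\<^sup>2 / (K * (K + 1))"
proof -
  have poly: "K * (T + z)\<^sup>2 = (K + 1) * T\<^sup>2 + K * (K + 1) * z\<^sup>2 - (K * z - T)\<^sup>2"
    by (simp add: algebra_simps power2_eq_square)
  have "(T + z)\<^sup>2 / (K + 1) = (K * (T + z)\<^sup>2) / (K * (K + 1))" using K by simp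
  also have "\<dots> = ((K + 1) * T\<^sup>2 + K * (K + 1) * z\<^sup>2 - (K * z - T)\<^sup>2) / (K * (K + 1))" using poly by simp
  also have "\<dots> = ((K + 1) * T\<^sup>2) / (K * (K + 1)) + (K * (K + 1) * z\<^sup>2) / (K * (K + 1)) - (K * z - T)\<^sup>2 / (K * (K + 1))"
    by (simp add: diff_divide_distrib add_divide_distrib)
  also have "((K + 1) * T\<^sup>2) / (K * (K + 1)) = T\<^sup>2 / K" using K by simp
  also have "(K * (K + 1) * z\<^sup>2) / (K * (K + 1)) = z\<^sup>2" using K by simp
  finally show ?thesis by linarith
qed
lemma Tz_measurable: "k \<le> m \<Longrightarrow> Tz \<mu> \<sigma> k \<in> borel_measurable (PiM {..<m} (\<lambda>_. NM \<mu>' \<sigma>'))"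
  unfolding Tz_def[abs_def] by (intro borel_measurable_sum borel_measurable_divide borel_measurable_diff
     measurable_component_singleton measurable_const) auto

lemma Qz_measurable: "k \<le> m \<Longrightarrow> Qz \<mu> \<sigma> k \<in> borel_measurable (PiM {..<m} (\<lambda>_. NM \<mu>' \<sigma>'))"
  unfolding Qz_def[abs_def] 
  by (intro borel_measurable_sum borel_measurable_divide borel_measurable_diff borel_measurable_power
     measurable_component_singleton measurable_const Tz_measurable) auto

lemma Tz_upd: "Tz \<mu> \<sigma> (Suc k) (x(k := y)) = Tz \<mu> \<sigma> k x + (y - \<mu>) / \<sigma>"
  unfolding Tz_def by (simp add: sum.lessThan_Suc)

lemma Qz_upd:
  assumes k: "0 < k"
  shows "Qz \<mu> \<sigma> (Suc k) (x(k := y)) =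
    Qz \<mu> \<sigma> k x + (((sqrt (real k))\<^sup>2 * ((y - \<mu>) / \<sigma>) - Tz \<mu> \<sigma> k x) / (sqrt (real k) * sqrt (real (Suc k))))\<^sup>2"
proof -
  define z where "z = (y - \<mu>) / \<sigma>"
  define T where "T = Tz \<mu> \<sigma> k x"
  define S where "S = (\<Sum>i<k. ((x i - \<mu>) / \<sigma>)\<^sup>2)"
  have S: "(\<Sum>i<Suc k. (((x(k := y)) i - \<mu>) / \<sigma>)\<^sup>2) = S + z\<^sup>2"
    unfolding S_def z_def by (simp add: sum.lessThan_Suc)
  have lhs: "Qz \<mu> \<sigma> (Suc k) (x(k := y)) = S + z\<^sup>2 - (T + z)\<^sup>2 / (real k + 1)"
    unfolding Qz_def S Tz_upd T_def z_def by simp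
  have rhs: "Qz \<mu> \<sigma> k x = S - T\<^sup>2 / real k" unfolding Qz_def S_def T_def ..
  have sq: "(sqrt (real k))\<^sup>2 = real k" by simp
  have sq2: "(sqrt (real k) * sqrt (real (Suc k)))\<^sup>2 = real k * (real k + 1)"
    by (simp add: power_mult_distrib)
  have "S + z\<^sup>2 - (T + z)\<^sup>2 / (real k + 1) = S - T\<^sup>2 / real k + (real k * z - T)\<^sup>2 / (real k * (real k + 1))"
    by (rule alg1) (use k in simp)
  also have "(real k * z - T)\<^sup>2 / (real k * (real k + 1)) = ((real k * z - T) / (sqrt (real k) * sqrt (real (Suc k))))\<^sup>2"
    by (simp only: power_divide sq2)
  finally show ?thesis unfolding lhs rhs sq z_def T_def .
qed

lemma pair_sf: "0 < s \<Longrightarrow> pair_sigma_finite (Nd s) (Chi m)"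
  unfolding pair_sigma_finite_def using sigma_finite_Nd[of s] sigma_finite_Chi[of m] by auto

lemma pair_sf': "0 < s \<Longrightarrow> pair_sigma_finite (Chi m) (Nd s)"
  unfolding pair_sigma_finite_def using sigma_finite_Nd[of s] sigma_finite_Chi[of m] by auto

lemma main_ind:
  assumes s: "0 < \<sigma>"
  shows "(\<lambda>(x, y). h x y) \<in> borel_measurable (borel \<Otimes>\<^sub>M borel) \<Longrightarrow>
    (\<integral>\<^sup>+x. h (Tz \<mu> \<sigma> (Suc j) x) (Qz \<mu> \<sigma> (Suc j) x) \<partial>PiM {..<Suc j} (\<lambda>_. NM \<mu> \<sigma>))
      = (\<integral>\<^sup>+t. \<integral>\<^sup>+q. h t q \<partial>Chi j \<partial>Nd (sqrt (real (Suc j))))"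
proof (induction j arbitrary: h)
  interpret P: product_sigma_finite "\<lambda>_. NM \<mu> \<sigma>"
    unfolding product_sigma_finite_def using prob_space_NM[OF s] by (auto intro: prob_space_imp_sigma_finite)
  {
  case 0
  note hm[measurable] = 0
  have "(\<integral>\<^sup>+x. h (Tz \<mu> \<sigma> (Suc 0) x) (Qz \<mu> \<sigma> (Suc 0) x) \<partial>PiM {..<Suc 0} (\<lambda>_. NM \<mu> \<sigma>))
      = (\<integral>\<^sup>+x. (\<lambda>y. h ((y - \<mu>) / \<sigma>) 0) (x 0) \<partial>PiM {0::nat} (\<lambda>_. NM \<mu> \<sigma>))"
  proof -
    have e: "{..<Suc 0} = {0::nat}" by auto
    show ?thesis unfolding e by (rule nn_integral_cong) (simp add: Tz_def Qz_def)
  qed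
  also have "\<dots> = (\<integral>\<^sup>+y. h ((y - \<mu>) / \<sigma>) 0 \<partial>NM \<mu> \<sigma>)"
    by (rule P.product_nn_integral_singleton) measurable
  also have "\<dots> = (\<integral>\<^sup>+z. h z 0 \<partial>Nd 1)"
    unfolding NM_def by (rule std_nn[OF s]) measurable
  also have "\<dots> = (\<integral>\<^sup>+t. \<integral>\<^sup>+q. h t q \<partial>Chi 0 \<partial>Nd (sqrt (real (Suc 0))))"
    by (simp add: Chi_def nn_integral_return)
  finally show ?case .
  }
  {
  case (Suc j)
  note hm[measurable] = Suc.prems
  define k where "k = Suc j"
  have k: "0 < k" by (simp add: k_def)
  define a where "a = sqrt (real k)"
  define b where "b = sqrt (real (Suc k))"
  have a: "0 < a" using k by (simp add: a_def)
  have b: "0 < b" by (simp add: b_def)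
  have bb: "b\<^sup>2 = a\<^sup>2 + 1" by (simp add: a_def b_def)
  define G where "G t q = (\<integral>\<^sup>+z. h (t + z) (q + ((a\<^sup>2 * z - t) / (a * b))\<^sup>2) \<partial>Nd 1)" for t q
  have Gm[measurable]: "(\<lambda>(t, q). G t q) \<in> borel_measurable (borel \<Otimes>\<^sub>M borel)"
  proof -
    have "(\<lambda>p. \<integral>\<^sup>+z. (\<lambda>(p, z). h (fst p + z) (snd p + ((a\<^sup>2 * z - fst p) / (a * b))\<^sup>2)) (p, z) \<partial>Nd 1) \<in> borel_measurable (borel \<Otimes>\<^sub>M borel)"
      by (rule sigma_finite_measure.borel_measurable_nn_integral_fst[OF sigma_finite_Nd]) (simp, measurable)
    moreover have "(\<lambda>(t, q). G t q) = (\<lambda>p. \<integral>\<^sup>+z. (\<lambda>(p, z). h (fst p + z) (snd p + ((a\<^sup>2 * z - fst p) / (a * b))\<^sup>2)) (p, z) \<partial>Nd 1)"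
      by (auto simp: G_def fun_eq_iff)
    ultimately show ?thesis by simp
  qed
  have Fm[measurable]: "(\<lambda>(u, q). \<integral>\<^sup>+v. h u (q + v\<^sup>2) \<partial>Nd 1) \<in> borel_measurable (borel \<Otimes>\<^sub>M borel)"
  proof -
    have "(\<lambda>p. \<integral>\<^sup>+v. (\<lambda>(p, v). h (fst p) (snd p + v\<^sup>2)) (p, v) \<partial>Nd 1) \<in> borel_measurable (borel \<Otimes>\<^sub>M borel)"
      by (rule sigma_finite_measure.borel_measurable_nn_integral_fst[OF sigma_finite_Nd]) (simp, measurable)
    moreover have "(\<lambda>(u, q). \<integral>\<^sup>+v. h u (q + v\<^sup>2) \<partial>Nd 1) = (\<lambda>p. \<integral>\<^sup>+v. (\<lambda>(p, v). h (fst p) (snd p + v\<^sup>2)) (p, v) \<partial>Nd 1)"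
      by (auto simp: fun_eq_iff)
    ultimately show ?thesis by simp
  qed
  have m1: "(\<lambda>x. h (Tz \<mu> \<sigma> (Suc k) x) (Qz \<mu> \<sigma> (Suc k) x)) \<in> borel_measurable (PiM (insert k {..<k}) (\<lambda>_. NM \<mu> \<sigma>))"
  proof -
    have [measurable]: "Tz \<mu> \<sigma> (Suc k) \<in> borel_measurable (PiM {..<Suc k} (\<lambda>_. NM \<mu> \<sigma>))"
      by (rule Tz_measurable) simp
    have [measurable]: "Qz \<mu> \<sigma> (Suc k) \<in> borel_measurable (PiM {..<Suc k} (\<lambda>_. NM \<mu> \<sigma>))"
      by (rule Qz_measurable) simp
    have "(\<lambda>x. h (Tz \<mu> \<sigma> (Suc k) x) (Qz \<mu> \<sigma> (Suc k) x)) \<in> borel_measurable (PiM {..<Suc k} (\<lambda>_. NM \<mu> \<sigma>))"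
      by measurable
    then show ?thesis by (simp add: lessThan_Suc)
  qed
  have "(\<integral>\<^sup>+x. h (Tz \<mu> \<sigma> (Suc k) x) (Qz \<mu> \<sigma> (Suc k) x) \<partial>PiM {..<Suc k} (\<lambda>_. NM \<mu> \<sigma>))
      = (\<integral>\<^sup>+x. h (Tz \<mu> \<sigma> (Suc k) x) (Qz \<mu> \<sigma> (Suc k) x) \<partial>PiM (insert k {..<k}) (\<lambda>_. NM \<mu> \<sigma>))"
    by (simp add: lessThan_Suc)
  also have "\<dots> = (\<integral>\<^sup>+x. \<integral>\<^sup>+y. h (Tz \<mu> \<sigma> (Suc k) (x(k := y))) (Qz \<mu> \<sigma> (Suc k) (x(k := y))) \<partial>NM \<mu> \<sigma> \<partial>PiM {..<k} (\<lambda>_. NM \<mu> \<sigma>))"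
    by (rule P.product_nn_integral_insert) (auto intro: m1)
  also have "\<dots> = (\<integral>\<^sup>+x. G (Tz \<mu> \<sigma> k x) (Qz \<mu> \<sigma> k x) \<partial>PiM {..<k} (\<lambda>_. NM \<mu> \<sigma>))"
  proof (rule nn_integral_cong)
    fix x :: "nat \<Rightarrow> real"
    have "(\<integral>\<^sup>+y. h (Tz \<mu> \<sigma> (Suc k) (x(k := y))) (Qz \<mu> \<sigma> (Suc k) (x(k := y))) \<partial>NM \<mu> \<sigma>)
       = (\<integral>\<^sup>+y. (\<lambda>z. h (Tz \<mu> \<sigma> k x + z) (Qz \<mu> \<sigma> k x + ((a\<^sup>2 * z - Tz \<mu> \<sigma> k x) / (a * b))\<^sup>2)) ((y - \<mu>) / \<sigma>) \<partial>NM \<mu> \<sigma>)"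
      unfolding Tz_upd Qz_upd[OF k] a_def b_def ..
    also have "\<dots> = G (Tz \<mu> \<sigma> k x) (Qz \<mu> \<sigma> k x)"
      unfolding NM_def G_def by (rule std_nn[OF s]) measurable
    finally show "(\<integral>\<^sup>+y. h (Tz \<mu> \<sigma> (Suc k) (x(k := y))) (Qz \<mu> \<sigma> (Suc k) (x(k := y))) \<partial>NM \<mu> \<sigma>)
       = G (Tz \<mu> \<sigma> k x) (Qz \<mu> \<sigma> k x)" .
  qed
  also have "\<dots> = (\<integral>\<^sup>+t. \<integral>\<^sup>+q. G t q \<partial>Chi j \<partial>Nd a)"
    unfolding k_def a_def by (rule Suc.IH) (rule Gm)
  also have "\<dots> = (\<integral>\<^sup>+q. \<integral>\<^sup>+t. G t q \<partial>Nd a \<partial>Chi j)"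
    by (rule pair_sigma_finite.Fubini'[OF pair_sf[OF a], symmetric]) measurable
  also have "\<dots> = (\<integral>\<^sup>+q. \<integral>\<^sup>+u. \<integral>\<^sup>+v. h u (q + v\<^sup>2) \<partial>Nd 1 \<partial>Nd b \<partial>Chi j)"
  proof (rule nn_integral_cong)
    fix q :: real
    show "(\<integral>\<^sup>+t. G t q \<partial>Nd a) = (\<integral>\<^sup>+u. \<integral>\<^sup>+v. h u (q + v\<^sup>2) \<partial>Nd 1 \<partial>Nd b)"
      unfolding G_def using rot_nn[OF a b bb, of "\<lambda>u v. h u (q + v\<^sup>2)"] by simp
  qed
  also have "\<dots> = (\<integral>\<^sup>+u. \<integral>\<^sup>+q. \<integral>\<^sup>+v. h u (q + v\<^sup>2) \<partial>Nd 1 \<partial>Chi j \<partial>Nd b)"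
    by (rule pair_sigma_finite.Fubini'[OF pair_sf[OF b]]) measurable
  also have "\<dots> = (\<integral>\<^sup>+u. \<integral>\<^sup>+r. h u r \<partial>Chi k \<partial>Nd b)"
    unfolding k_def by (intro nn_integral_cong chi_conv) measurable
  finally show ?case unfolding k_def b_def .
  }
qed

definition bp :: "real \<Rightarrow> real \<Rightarrow> real \<Rightarrow> real" where
  "bp a b w = (if 0 < w then w powr (b - 1) * (1 + w) powr (- (a + b)) / Beta a b else 0)"

lemma bp_point:
  fixes a b w :: real
  assumes a: "0 < a" and b: "0 < b" and w: "0 < w"
  shows "(\<integral>\<^sup>+q. ennreal (gd a q * q * gd b (q * w)) \<partial>lborel) = ennreal (bp a b w)"
proof -
  define C where "C = w powr (b - 1) / (2 powr a * Gamma a * (2 powr b * Gamma b))"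
  have ga: "0 < Gamma a" "0 < Gamma b" "0 < Gamma (a + b)" using a b by auto
  have C: "0 \<le> C" unfolding C_def using ga by simp
  have pt: "gd a q * q * gd b (q * w) = C * (indicator {0<..} q * q powr (a + b - 1) * exp (- ((1 + w) / 2 * q)))" for q
  proof (cases "0 < q")
    case True
    have e1: "(q * w) powr (b - 1) = q powr (b - 1) * w powr (b - 1)" using True w by (simp add: powr_mult)
    have e2: "q powr (a - 1) * q * q powr (b - 1) = q powr (a + b - 1)"
    proof -
      have q1: "q powr 1 = q" using True by simp
      have "q powr (a - 1) * q * q powr (b - 1) = q powr (a - 1) * q powr 1 * q powr (b - 1)" by (simp only: q1)
      also have "\<dots> = q powr ((a - 1) + 1 + (b - 1))" by (simp only: powr_add)
      also have "(a - 1) + 1 + (b - 1) = a + b - 1" by simp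
      finally show ?thesis .
    qed
    have e3: "exp (- q / 2) * exp (- (q * w) / 2) = exp (- ((1 + w) / 2 * q))"
      by (simp add: exp_add[symmetric] field_simps)
    have "gd a q * q * gd b (q * w) = (q powr (a - 1) * q * q powr (b - 1)) * w powr (b - 1) * (exp (- q / 2) * exp (- (q * w) / 2))
        / (2 powr a * Gamma a * (2 powr b * Gamma b))"
      using True w unfolding gd_def e1 by (simp add: field_simps)
    also have "\<dots> = C * (indicator {0<..} q * q powr (a + b - 1) * exp (- ((1 + w) / 2 * q)))"
      unfolding e2 e3 C_def using True by (simp add: field_simps)
    finally show ?thesis .
  next
    case False
    then show ?thesis by (simp add: gd_def)
  qed
  have "(\<integral>\<^sup>+q. ennreal (gd a q * q * gd b (q * w)) \<partial>lborel)
      = (\<integral>\<^sup>+q. ennreal C * ennreal (indicator {0<..} q * q powr (a + b - 1) * exp (- ((1 + w) / 2 * q))) \<partial>lborel)"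
    unfolding pt using C by (intro nn_integral_cong) (simp add: ennreal_mult')
  also have "\<dots> = ennreal C * (\<integral>\<^sup>+q. ennreal (indicator {0<..} q * q powr (a + b - 1) * exp (- ((1 + w) / 2 * q))) \<partial>lborel)"
    by (rule nn_integral_cmult) measurable
  also have "\<dots> = ennreal C * ennreal (Gamma (a + b) / ((1 + w) / 2) powr (a + b))"
    using gamma_scaled[of "a + b" "(1 + w) / 2"] a b w by simp
  also have "\<dots> = ennreal (C * (Gamma (a + b) / ((1 + w) / 2) powr (a + b)))"
    using C by (rule ennreal_mult'[symmetric])
  also have "C * (Gamma (a + b) / ((1 + w) / 2) powr (a + b)) = bp a b w"
  proof -
    have "((1 + w) / 2) powr (a + b) = (1 + w) powr (a + b) / 2 powr (a + b)"
      using w by (simp add: powr_divide)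
    moreover have "(1 + w) powr (- (a + b)) = 1 / (1 + w) powr (a + b)"
      by (rule powr_minus_divide)
    moreover have "(2::real) powr (a + b) = 2 powr a * 2 powr b" by (simp add: powr_add)
    moreover have "0 < (1 + w) powr (a + b)" using w by simp
    ultimately show ?thesis
      unfolding C_def bp_def Beta_def using w ga by (simp add: field_simps)
  qed
  finally show ?thesis .
qed

lemma bp_point_nonpos:
  fixes a b w :: real
  assumes a: "0 < a" and b: "0 < b" and w: "\<not> 0 < w"
  shows "(\<integral>\<^sup>+q. ennreal (gd a q * q * gd b (q * w)) \<partial>lborel) = ennreal (bp a b w)"
proof -
  have z0: "gd a q * q * gd b (q * w) = 0" for q
  proof (cases "0 < q")
    case True
    then have "\<not> 0 < q * w" using w by (simp add: mult_le_0_iff not_less)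
    then show ?thesis by (simp add: gd_def)
  qed (simp add: gd_def)
  have z: "ennreal (gd a q * q * gd b (q * w)) = 0" for q by (simp only: z0 ennreal_0)
  have "(\<integral>\<^sup>+q. ennreal (gd a q * q * gd b (q * w)) \<partial>lborel) = 0"
    unfolding z by simp
  then show ?thesis using w by (simp add: bp_def)
qed

lemma beta_prime_nn:
  fixes a b :: real
  assumes a: "0 < a" and b: "0 < b" and [measurable]: "F \<in> borel_measurable borel"
  shows "(\<integral>\<^sup>+q. \<integral>\<^sup>+y. F (y / q) \<partial>density lborel (\<lambda>x. ennreal (gd b x)) \<partial>density lborel (\<lambda>x. ennreal (gd a x)))
      = (\<integral>\<^sup>+w. ennreal (bp a b w) * F w \<partial>lborel)"
proof -
  have in1: "(\<integral>\<^sup>+y. F (y / q) \<partial>density lborel (\<lambda>x. ennreal (gd b x))) = (\<integral>\<^sup>+y. ennreal (gd b y) * F (y / q) \<partial>lborel)" for q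
    by (rule nn_integral_density) measurable
  have "(\<integral>\<^sup>+q. \<integral>\<^sup>+y. F (y / q) \<partial>density lborel (\<lambda>x. ennreal (gd b x)) \<partial>density lborel (\<lambda>x. ennreal (gd a x)))
      = (\<integral>\<^sup>+q. \<integral>\<^sup>+y. ennreal (gd b y) * F (y / q) \<partial>lborel \<partial>density lborel (\<lambda>x. ennreal (gd a x)))"
    by (simp only: in1)
  also have "\<dots> = (\<integral>\<^sup>+q. ennreal (gd a q) * (\<integral>\<^sup>+y. ennreal (gd b y) * F (y / q) \<partial>lborel) \<partial>lborel)"
    by (rule nn_integral_density) measurable
  also have "\<dots> = (\<integral>\<^sup>+q. \<integral>\<^sup>+w. ennreal (gd a q * q * gd b (q * w)) * F w \<partial>lborel \<partial>lborel)"
  proof (rule nn_integral_cong)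
    fix q :: real
    show "ennreal (gd a q) * (\<integral>\<^sup>+y. ennreal (gd b y) * F (y / q) \<partial>lborel)
        = (\<integral>\<^sup>+w. ennreal (gd a q * q * gd b (q * w)) * F w \<partial>lborel)"
    proof (cases "0 < q")
      case True
      have "(\<integral>\<^sup>+y. ennreal (gd b y) * F (y / q) \<partial>lborel)
          = ennreal \<bar>q\<bar> * (\<integral>\<^sup>+w. ennreal (gd b (0 + q * w)) * F ((0 + q * w) / q) \<partial>lborel)"
        using True by (intro nn_integral_real_affine) auto
      also have "\<dots> = ennreal q * (\<integral>\<^sup>+w. ennreal (gd b (q * w)) * F w \<partial>lborel)"
        using True by simp
      finally have eq: "(\<integral>\<^sup>+y. ennreal (gd b y) * F (y / q) \<partial>lborel) = ennreal q * (\<integral>\<^sup>+w. ennreal (gd b (q * w)) * F w \<partial>lborel)" .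
      have "ennreal (gd a q) * (ennreal q * (\<integral>\<^sup>+w. ennreal (gd b (q * w)) * F w \<partial>lborel))
          = (\<integral>\<^sup>+w. ennreal (gd a q) * ennreal q * (ennreal (gd b (q * w)) * F w) \<partial>lborel)"
      proof -
        have "ennreal q * (\<integral>\<^sup>+w. ennreal (gd b (q * w)) * F w \<partial>lborel) = (\<integral>\<^sup>+w. ennreal q * (ennreal (gd b (q * w)) * F w) \<partial>lborel)"
          by (rule nn_integral_cmult[symmetric]) measurable
        moreover have "ennreal (gd a q) * (\<integral>\<^sup>+w. ennreal q * (ennreal (gd b (q * w)) * F w) \<partial>lborel) = (\<integral>\<^sup>+w. ennreal (gd a q) * (ennreal q * (ennreal (gd b (q * w)) * F w)) \<partial>lborel)"
          by (rule nn_integral_cmult[symmetric]) measurable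
        ultimately show ?thesis by (simp add: mult.assoc)
      qed
      also have "\<dots> = (\<integral>\<^sup>+w. ennreal (gd a q * q * gd b (q * w)) * F w \<partial>lborel)"
        using True a b by (intro nn_integral_cong) (simp add: ennreal_mult' gd_nonneg mult.assoc)
      finally show ?thesis unfolding eq .
    next
      case False
      then show ?thesis by (simp add: gd_def)
    qed
  qed
  also have "\<dots> = (\<integral>\<^sup>+w. \<integral>\<^sup>+q. ennreal (gd a q * q * gd b (q * w)) * F w \<partial>lborel \<partial>lborel)"
    by (rule lborel_pair.Fubini'[symmetric]) measurable
  also have "\<dots> = (\<integral>\<^sup>+w. (\<integral>\<^sup>+q. ennreal (gd a q * q * gd b (q * w)) \<partial>lborel) * F w \<partial>lborel)"
    by (rule nn_integral_cong) (rule nn_integral_multc, measurable)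
  also have "\<dots> = (\<integral>\<^sup>+w. ennreal (bp a b w) * F w \<partial>lborel)"
    by (rule nn_integral_cong) (metis a b bp_point bp_point_nonpos)
  finally show ?thesis .
qed

lemma nd_scale:
  assumes s: "0 < s" and [measurable]: "G \<in> borel_measurable borel"
  shows "(\<integral>\<^sup>+t. G t \<partial>Nd s) = (\<integral>\<^sup>+v. G (s * v) \<partial>Nd 1)"
proof -
  have "(\<integral>\<^sup>+t. G t \<partial>Nd s) = (\<integral>\<^sup>+y. (\<lambda>z. G (s * z)) ((y - 0) / s) \<partial>NM 0 s)"
    unfolding Nd_def NM_def using s by simp
  also have "\<dots> = (\<integral>\<^sup>+v. G (s * v) \<partial>Nd 1)"
    unfolding NM_def by (rule std_nn[OF s]) measurable
  finally show ?thesis .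
qed

lemma final_nn:
  assumes n: "2 \<le> n" and s: "0 < \<sigma>" and [measurable]: "g \<in> borel_measurable borel"
  shows "(\<integral>\<^sup>+x. g ((Tz \<mu> \<sigma> n x)\<^sup>2 / (real n * Qz \<mu> \<sigma> n x)) \<partial>PiM {..<n} (\<lambda>_. NM \<mu> \<sigma>))
       = (\<integral>\<^sup>+w. ennreal (bp ((real n - 1) / 2) (1 / 2) w) * g w \<partial>lborel)"
proof -
  obtain j where j: "n = Suc j" using n by (cases n) auto
  have j1: "j \<noteq> 0" using n j by simp
  have sn: "0 < sqrt (real n)" using n by simp
  have "(\<integral>\<^sup>+x. g ((Tz \<mu> \<sigma> n x)\<^sup>2 / (real n * Qz \<mu> \<sigma> n x)) \<partial>PiM {..<n} (\<lambda>_. NM \<mu> \<sigma>))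
      = (\<integral>\<^sup>+t. \<integral>\<^sup>+q. g (t\<^sup>2 / (real n * q)) \<partial>Chi j \<partial>Nd (sqrt (real n)))"
    unfolding j by (rule main_ind[OF s]) measurable
  also have "\<dots> = (\<integral>\<^sup>+q. \<integral>\<^sup>+t. g (t\<^sup>2 / (real n * q)) \<partial>Nd (sqrt (real n)) \<partial>Chi j)"
    by (rule pair_sigma_finite.Fubini'[OF pair_sf[OF sn], symmetric]) measurable
  also have "\<dots> = (\<integral>\<^sup>+q. \<integral>\<^sup>+y. g (y / q) \<partial>Chi 1 \<partial>Chi j)"
  proof (rule nn_integral_cong)
    fix q :: real
    have "(\<integral>\<^sup>+t. g (t\<^sup>2 / (real n * q)) \<partial>Nd (sqrt (real n))) = (\<integral>\<^sup>+v. g ((sqrt (real n) * v)\<^sup>2 / (real n * q)) \<partial>Nd 1)"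
      by (rule nd_scale[OF sn]) measurable
    also have "\<dots> = (\<integral>\<^sup>+v. g (v\<^sup>2 / q) \<partial>Nd 1)"
      using n by (simp add: power_mult_distrib)
    also have "\<dots> = (\<integral>\<^sup>+y. g (y / q) \<partial>Chi 1)"
      by (rule sq_nn) measurable
    finally show "(\<integral>\<^sup>+t. g (t\<^sup>2 / (real n * q)) \<partial>Nd (sqrt (real n))) = (\<integral>\<^sup>+y. g (y / q) \<partial>Chi 1)" .
  qed
  also have "\<dots> = (\<integral>\<^sup>+w. ennreal (bp ((real n - 1) / 2) (1 / 2) w) * g w \<partial>lborel)"
  proof -
    have c1: "Chi 1 = density lborel (\<lambda>x. ennreal (gd (1 / 2) x))" by (simp add: Chi_def)
    have cj: "Chi j = density lborel (\<lambda>x. ennreal (gd ((real n - 1) / 2) x))" using j1 j by (simp add: Chi_def)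
    show ?thesis unfolding c1 cj by (rule beta_prime_nn) (use j1 j in auto)
  qed
  finally show ?thesis .
qed

definition fw :: "real \<Rightarrow> real \<Rightarrow> real \<Rightarrow> real" where
  "fw b c w = (if 0 < w then w powr (b - 1) * (1 + w) powr (- c) else 0)"

lemma fw_nonneg: "0 \<le> fw b c w"
  unfolding fw_def by auto

lemma fw_meas[measurable]: "fw b c \<in> borel_measurable borel"
  unfolding fw_def by measurable

lemma Beta_pos: "0 < a \<Longrightarrow> 0 < b \<Longrightarrow> 0 < Beta a (b::real)"
  unfolding Beta_def by simp

lemma bp_fw: "0 < a \<Longrightarrow> 0 < b \<Longrightarrow> fw b (a + b) w = Beta a b * bp a b w"
  unfolding fw_def bp_def using Beta_pos[of a b] by auto

lemma fw_nn:
  assumes b: "0 < b" and c: "b < c"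
  shows "(\<integral>\<^sup>+w. ennreal (fw b c w) \<partial>lborel) = ennreal (Beta (c - b) b)"
proof -
  define a where "a = c - b"
  have a: "0 < a" using c by (simp add: a_def)
  have ca: "c = a + b" by (simp add: a_def)
  interpret A: prob_space "density lborel (\<lambda>x. ennreal (gd a x))" by (rule prob_space_gd[OF a])
  interpret B: prob_space "density lborel (\<lambda>x. ennreal (gd b x))" by (rule prob_space_gd[OF b])
  have "(\<integral>\<^sup>+w. ennreal (bp a b w) * 1 \<partial>lborel) =
      (\<integral>\<^sup>+q. \<integral>\<^sup>+y. (\<lambda>_. 1) (y / q) \<partial>density lborel (\<lambda>x. ennreal (gd b x)) \<partial>density lborel (\<lambda>x. ennreal (gd a x)))"
    by (rule beta_prime_nn[OF a b, symmetric]) simp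
  also have "\<dots> = 1"
  proof -
    have "emeasure (density lborel (\<lambda>x. ennreal (gd a x))) UNIV = 1" using A.emeasure_space_1 by simp
    moreover have "emeasure (density lborel (\<lambda>x. ennreal (gd b x))) UNIV = 1" using B.emeasure_space_1 by simp
    ultimately show ?thesis by simp
  qed
  finally have one: "(\<integral>\<^sup>+w. ennreal (bp a b w) \<partial>lborel) = 1" by simp
  have "(\<integral>\<^sup>+w. ennreal (fw b c w) \<partial>lborel) = (\<integral>\<^sup>+w. ennreal (Beta a b) * ennreal (bp a b w) \<partial>lborel)"
    unfolding ca using Beta_pos[OF a b] by (intro nn_integral_cong) (simp add: bp_fw[OF a b] ennreal_mult')
  also have "\<dots> = ennreal (Beta a b) * (\<integral>\<^sup>+w. ennreal (bp a b w) \<partial>lborel)"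
    by (rule nn_integral_cmult) (simp add: bp_def)
  also have "\<dots> = ennreal (Beta (c - b) b)" unfolding one by (simp add: a_def)
  finally show ?thesis .
qed

lemma fw_int: "0 < b \<Longrightarrow> b < c \<Longrightarrow> integrable lborel (fw b c)"
  by (rule integrableI_nn_integral_finite[OF _ _ fw_nn]) (auto simp: fw_nonneg)

lemma ln_bound:
  fixes y d :: real
  assumes y: "1 \<le> y" and d: "0 < d"
  shows "ln y \<le> y powr d / d"
proof -
  have "ln (y powr d) \<le> y powr d - 1" using y by (intro ln_le_minus_one) simp
  then have "d * ln y \<le> y powr d" using y by (simp add: ln_powr)
  then show ?thesis using d by (simp add: field_simps)
qed

lemma lnp_fw_int:
  assumes b: "0 < b" and c: "b < c"
  shows "integrable lborel (\<lambda>w. ln (1 + w) ^ p * fw b c w)"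
proof (cases "p = 0")
  case True
  then show ?thesis using fw_int[OF b c] by simp
next
  case False
  define d where "d = (c - b) / (2 * real p)"
  have d: "0 < d" using False c by (simp add: d_def)
  define c' where "c' = c - real p * d"
  have c': "b < c'" using False c unfolding c'_def d_def by (simp add: field_simps)
  show ?thesis
  proof (rule Bochner_Integration.integrable_bound[OF integrable_mult_right[OF fw_int[OF b c'], of "1 / d ^ p"]])
    show "(\<lambda>w. ln (1 + w) ^ p * fw b c w) \<in> borel_measurable lborel" by measurable
    show "AE w in lborel. norm (ln (1 + w) ^ p * fw b c w) \<le> norm (1 / d ^ p * fw b c' w)"
    proof (rule AE_I2)
      fix w :: real
      show "norm (ln (1 + w) ^ p * fw b c w) \<le> norm (1 / d ^ p * fw b c' w)"
      proof (cases "0 < w")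
        case True
        have l0: "0 \<le> ln (1 + w)" using True by simp
        have "ln (1 + w) ^ p \<le> ((1 + w) powr d / d) ^ p"
          using ln_bound[of "1 + w" d] True d l0 by (intro power_mono) auto
        also have "\<dots> = (1 + w) powr (real p * d) / d ^ p"
          using True by (simp add: power_divide powr_power)
        finally have lp: "ln (1 + w) ^ p \<le> (1 + w) powr (real p * d) / d ^ p" .
        have "ln (1 + w) ^ p * fw b c w \<le> (1 + w) powr (real p * d) / d ^ p * fw b c w"
          using lp fw_nonneg by (rule mult_right_mono)
        also have "\<dots> = 1 / d ^ p * fw b c' w"
          using True unfolding fw_def c'_def by (simp add: powr_add[symmetric] field_simps)
        finally show ?thesis using l0 fw_nonneg[of b c w] fw_nonneg[of b c' w] d by simp
      next
        case False
        then show ?thesis by (simp add: fw_def)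
      qed
    qed
  qed
qed

definition IJ :: "real \<Rightarrow> real \<Rightarrow> nat \<Rightarrow> real" where
  "IJ b c p = (\<integral>w. ln (1 + w) ^ p * fw b c w \<partial>lborel)"

lemma tang_pt:
  fixes L c c0 :: real
  assumes L: "0 \<le> L"
  shows "exp (- (c0 * L)) - (c - c0) * L * exp (- (c0 * L)) \<le> exp (- (c * L))"
proof -
  have "exp (- (c0 * L)) * (1 + (- ((c - c0) * L))) \<le> exp (- (c0 * L)) * exp (- ((c - c0) * L))"
    by (intro mult_left_mono exp_ge_add_one_self) simp
  also have "\<dots> = exp (- (c * L))" by (simp add: exp_add[symmetric] algebra_simps)
  finally show ?thesis by (simp add: algebra_simps)
qed

lemma tang_fw:
  "ln (1 + w) ^ p * fw b c0 w - (c - c0) * (ln (1 + w) ^ Suc p * fw b c0 w) \<le> ln (1 + w) ^ p * fw b c w"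
proof (cases "0 < w")
  case True
  define L where "L = ln (1 + w)"
  have L: "0 \<le> L" using True by (simp add: L_def)
  have e: "(1 + w) powr (- x) = exp (- (x * L))" for x
    using True by (simp add: powr_def L_def)
  have "L ^ p * w powr (b - 1) * (exp (- (c0 * L)) - (c - c0) * L * exp (- (c0 * L))) \<le> L ^ p * w powr (b - 1) * exp (- (c * L))"
    using L by (intro mult_left_mono tang_pt) auto
  then show ?thesis using True unfolding fw_def e L_def[symmetric] by (simp add: algebra_simps)
next
  case False
  then show ?thesis by (simp add: fw_def)
qed

lemma tang_int:
  assumes b: "0 < b" and c: "b < c" and c0: "b < c0"
  shows "IJ b c0 p - (c - c0) * IJ b c0 (Suc p) \<le> IJ b c p"
proof -
  have i1: "integrable lborel (\<lambda>w. ln (1 + w) ^ p * fw b c0 w)" by (rule lnp_fw_int[OF b c0])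
  have i2: "integrable lborel (\<lambda>w. (c - c0) * (ln (1 + w) ^ Suc p * fw b c0 w))"
    by (rule integrable_mult_right) (rule lnp_fw_int[OF b c0])
  have "IJ b c0 p - (c - c0) * IJ b c0 (Suc p) = (\<integral>w. ln (1 + w) ^ p * fw b c0 w - (c - c0) * (ln (1 + w) ^ Suc p * fw b c0 w) \<partial>lborel)"
  proof -
    have "(\<integral>w. ln (1 + w) ^ p * fw b c0 w - (c - c0) * (ln (1 + w) ^ Suc p * fw b c0 w) \<partial>lborel)
       = (\<integral>w. ln (1 + w) ^ p * fw b c0 w \<partial>lborel) - (\<integral>w. (c - c0) * (ln (1 + w) ^ Suc p * fw b c0 w) \<partial>lborel)"
      by (rule Bochner_Integration.integral_diff[OF i1 i2])
    also have "(\<integral>w. (c - c0) * (ln (1 + w) ^ Suc p * fw b c0 w) \<partial>lborel) = (c - c0) * (\<integral>w. ln (1 + w) ^ Suc p * fw b c0 w \<partial>lborel)"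
      by (rule integral_mult_right_zero)
    finally show ?thesis unfolding IJ_def by simp
  qed
  also have "\<dots> \<le> IJ b c p"
    unfolding IJ_def by (rule integral_mono[OF Bochner_Integration.integrable_diff[OF i1 i2] lnp_fw_int[OF b c] tang_fw])
  finally show ?thesis .
qed

lemma IJ0:
  assumes b: "0 < b" and c: "b < c"
  shows "IJ b c 0 = Beta (c - b) b"
proof -
  have "integrable lborel (fw b c) \<and> integral\<^sup>L lborel (fw b c) = Beta (c - b) b"
    using fw_nn[OF b c] Beta_pos[of "c - b" b] b c
    by (subst nn_integral_eq_integrable[symmetric]) (auto simp: fw_nonneg)
  then show ?thesis unfolding IJ_def by simp
qed

lemma pos_not_nonpos: "0 < (x::real) \<Longrightarrow> x \<notin> \<int>\<^sub>\<le>\<^sub>0"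
  by (auto dest: nonpos_Ints_nonpos)

definition Bf :: "real \<Rightarrow> real \<Rightarrow> real" where
  "Bf b c = Gamma (c - b) * Gamma b / Gamma c"

lemma Bf_Beta: "Bf b c = Beta (c - b) b"
  unfolding Bf_def Beta_def by simp

lemma DERIV_Bf:
  assumes b: "0 < b" and c: "b < c"
  shows "(Bf b has_real_derivative Bf b c * (Digamma (c - b) - Digamma c)) (at c)"
proof -
  have gc: "Gamma c \<noteq> 0" using b c Gamma_real_pos[of c] by linarith
  have g1: "(Gamma has_real_derivative Gamma (c - b) * Digamma (c - b)) (at (c - b))"
    by (rule has_field_derivative_Gamma) (rule pos_not_nonpos, use c in simp)
  have l1: "((\<lambda>x. x - b) has_real_derivative 1) (at c)"
    using DERIV_diff[OF DERIV_ident DERIV_const, of b c] by simp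
  have d1: "((\<lambda>x. Gamma (x - b)) has_real_derivative Gamma (c - b) * Digamma (c - b) * 1) (at c)"
    by (rule DERIV_chain2[OF g1 l1])
  have d1': "((\<lambda>x. Gamma (x - b) * Gamma b) has_real_derivative Gamma (c - b) * Digamma (c - b) * 1 * Gamma b) (at c)"
    by (rule DERIV_cmult_right[OF d1])
  have d2: "(Gamma has_real_derivative Gamma c * Digamma c) (at c)"
    by (rule has_field_derivative_Gamma) (rule pos_not_nonpos, use b c in simp)
  have d3: "((\<lambda>x. Gamma (x - b) * Gamma b / Gamma x) has_real_derivative
      ((Gamma (c - b) * Digamma (c - b) * 1 * Gamma b) * Gamma c - (Gamma (c - b) * Gamma b) * (Gamma c * Digamma c)) / (Gamma c * Gamma c)) (at c)"
    by (rule DERIV_divide[OF d1' d2 gc])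
  have e: "((Gamma (c - b) * Digamma (c - b) * 1 * Gamma b) * Gamma c - (Gamma (c - b) * Gamma b) * (Gamma c * Digamma c)) / (Gamma c * Gamma c)
      = Bf b c * (Digamma (c - b) - Digamma c)"
    unfolding Bf_def using gc by (simp add: field_simps)
  show ?thesis using d3 unfolding e Bf_def[abs_def] .
qed

lemma lin_deriv: "((\<lambda>y. (y - c) * K) has_real_derivative K) (at x)"
proof -
  have d: "((\<lambda>y. y - c) has_real_derivative 1) (at x)" by (auto intro!: derivative_eq_intros)
  show ?thesis using DERIV_cmult_right[OF d, of K] by simp
qed

lemma Dig_shift:
  assumes "0 < c - b"
  shows "((\<lambda>y. Digamma (y - b)) has_real_derivative Polygamma 1 (c - b)) (at (c::real))"
proof -
  have g1: "(Digamma has_real_derivative Polygamma 1 (c - b)) (at (c - b))"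
    using has_field_derivative_Polygamma[OF pos_not_nonpos[OF assms], of 0 UNIV] by simp
  have l1: "((\<lambda>x. x - b) has_real_derivative 1) (at c)"
    using DERIV_diff[OF DERIV_ident DERIV_const, of b c] by simp
  show ?thesis using DERIV_chain2[OF g1 l1] by simp
qed

lemma IJ1:
  assumes b: "0 < b" and c: "b < c"
  shows "IJ b c 1 = Bf b c * (Digamma c - Digamma (c - b))"
proof -
  define \<phi> where "\<phi> y = Bf b y + (y - c) * IJ b c 1" for y
  have D: "(\<phi> has_real_derivative (Bf b c * (Digamma (c - b) - Digamma c) + IJ b c 1)) (at c)"
    unfolding \<phi>_def[abs_def] by (rule DERIV_add[OF DERIV_Bf[OF b c] lin_deriv])
  have "Bf b c * (Digamma (c - b) - Digamma c) + IJ b c 1 = 0"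
  proof (rule DERIV_local_min[OF D, of "c - b"])
    show "0 < c - b" using c by simp
    show "\<forall>y. \<bar>c - y\<bar> < c - b \<longrightarrow> \<phi> c \<le> \<phi> y"
    proof (intro allI impI)
      fix y assume "\<bar>c - y\<bar> < c - b"
      then have y: "b < y" by linarith
      have "IJ b c 0 - (y - c) * IJ b c (Suc 0) \<le> IJ b y 0" by (rule tang_int[OF b y c])
      then show "\<phi> c \<le> \<phi> y"
        unfolding \<phi>_def using IJ0[OF b c] IJ0[OF b y] by (simp add: Bf_Beta)
    qed
  qed
  then show ?thesis by (simp add: algebra_simps)
qed

lemma IJ2:
  assumes b: "0 < b" and c: "b < c"
  shows "IJ b c 2 = Bf b c * ((Digamma c - Digamma (c - b))\<^sup>2 + Polygamma 1 (c - b) - Polygamma 1 c)"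
proof -
  define G1 where "G1 y = Bf b y * (Digamma y - Digamma (y - b))" for y
  define \<phi> where "\<phi> y = G1 y + (y - c) * IJ b c 2" for y
  have cb: "c \<notin> \<int>\<^sub>\<le>\<^sub>0" "c - b \<notin> \<int>\<^sub>\<le>\<^sub>0" using b c by (auto intro!: pos_not_nonpos)
  have DG: "(G1 has_real_derivative (Bf b c * (Digamma (c - b) - Digamma c) * (Digamma c - Digamma (c - b))
       + Bf b c * (Polygamma 1 c - Polygamma 1 (c - b)))) (at c)"
  proof -
    have dg: "((\<lambda>y. Digamma y - Digamma (y - b)) has_real_derivative Polygamma 1 c - Polygamma 1 (c - b)) (at c)"
      using DERIV_diff[OF Dig_shift[of c 0] Dig_shift[of c b]] b c by simp
    have "(G1 has_real_derivative (Bf b c * (Digamma (c - b) - Digamma c)) * (Digamma c - Digamma (c - b))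
       + (Polygamma 1 c - Polygamma 1 (c - b)) * Bf b c) (at c)"
      unfolding G1_def[abs_def] by (rule DERIV_mult[OF DERIV_Bf[OF b c] dg])
    then show ?thesis by (simp add: algebra_simps)
  qed
  have D: "(\<phi> has_real_derivative (Bf b c * (Digamma (c - b) - Digamma c) * (Digamma c - Digamma (c - b))
       + Bf b c * (Polygamma 1 c - Polygamma 1 (c - b)) + IJ b c 2)) (at c)"
    unfolding \<phi>_def[abs_def] by (rule DERIV_add[OF DG lin_deriv])
  have "Bf b c * (Digamma (c - b) - Digamma c) * (Digamma c - Digamma (c - b))
       + Bf b c * (Polygamma 1 c - Polygamma 1 (c - b)) + IJ b c 2 = 0"
  proof (rule DERIV_local_min[OF D, of "c - b"])
    show "0 < c - b" using c by simp
    show "\<forall>y. \<bar>c - y\<bar> < c - b \<longrightarrow> \<phi> c \<le> \<phi> y"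
    proof (intro allI impI)
      fix y assume "\<bar>c - y\<bar> < c - b"
      then have y: "b < y" by linarith
      have "IJ b c 1 - (y - c) * IJ b c (Suc 1) \<le> IJ b y 1" by (rule tang_int[OF b y c])
      then show "\<phi> c \<le> \<phi> y"
        unfolding \<phi>_def G1_def using IJ1[OF b c] IJ1[OF b y] by (simp add: numeral_2_eq_2)
    qed
  qed
  then show ?thesis by (simp add: algebra_simps power2_eq_square)
qed

lemma Tz_restrict: "Tz \<mu> \<sigma> n (restrict f {..<n}) = Tz \<mu> \<sigma> n f"
  unfolding Tz_def by (intro sum.cong) auto

lemma Qz_restrict: "Qz \<mu> \<sigma> n (restrict f {..<n}) = Qz \<mu> \<sigma> n f"
proof -
  have "(\<Sum>i<n. ((restrict f {..<n} i - \<mu>) / \<sigma>)\<^sup>2) = (\<Sum>i<n. ((f i - \<mu>) / \<sigma>)\<^sup>2)"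
    by (intro sum.cong) auto
  then show ?thesis unfolding Qz_def Tz_restrict by simp
qed

lemma Qz_alt:
  "Qz \<mu> \<sigma> n x = (\<Sum>i<n. ((x i - \<mu>) / \<sigma> - Tz \<mu> \<sigma> n x / real n)\<^sup>2)" if n: "0 < n"
proof -
  define z where "z i = (x i - \<mu>) / \<sigma>" for i
  define T where "T = Tz \<mu> \<sigma> n x"
  have T: "T = (\<Sum>i<n. z i)" unfolding T_def Tz_def z_def ..
  have "(\<Sum>i<n. (z i - T / real n)\<^sup>2) = (\<Sum>i<n. (z i)\<^sup>2 - 2 * (T / real n) * z i + (T / real n)\<^sup>2)"
    by (intro sum.cong) (auto simp: power2_diff)
  also have "\<dots> = (\<Sum>i<n. (z i)\<^sup>2) - 2 * (T / real n) * (\<Sum>i<n. z i) + real n * (T / real n)\<^sup>2"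
    by (simp add: sum.distrib sum_subtractf sum_distrib_left)
  also have "\<dots> = (\<Sum>i<n. (z i)\<^sup>2) - T\<^sup>2 / real n"
    unfolding T[symmetric] using n by (simp add: field_simps power2_eq_square)
  finally show ?thesis unfolding Qz_def z_def T_def by simp
qed

lemma Qz_nonneg: "0 < n \<Longrightarrow> 0 \<le> Qz \<mu> \<sigma> n x"
  by (simp add: Qz_alt sum_nonneg)

lemma U_eq:
  assumes n: "2 \<le> n" and s: "0 < \<sigma>"
  shows "U_stat X n \<mu> \<omega> = real n * ln (1 + (Tz \<mu> \<sigma> n (\<lambda>i. X i \<omega>))\<^sup>2 / (real n * Qz \<mu> \<sigma> n (\<lambda>i. X i \<omega>)))"
proof -
  define x where "x i = X i \<omega>" for i
  define z where "z i = (x i - \<mu>) / \<sigma>" for i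
  define T where "T = Tz \<mu> \<sigma> n x"
  define Q where "Q = Qz \<mu> \<sigma> n x"
  have n0: "0 < n" using n by simp
  have rn: "1 < real n" using n by simp
  have T: "T = (\<Sum>i<n. z i)" unfolding T_def Tz_def z_def ..
  have xz: "x i = \<mu> + \<sigma> * z i" for i unfolding z_def using s by simp
  have mean: "sample_mean X n \<omega> = \<mu> + \<sigma> * T / real n"
  proof -
    have "(\<Sum>i<n. X i \<omega>) = (\<Sum>i<n. \<mu> + \<sigma> * z i)" by (simp add: xz[symmetric] x_def)
    also have "\<dots> = real n * \<mu> + \<sigma> * T" by (simp add: sum.distrib sum_distrib_left T)
    finally show ?thesis unfolding sample_mean_def using n0 by (simp add: field_simps)
  qed
  have ssq: "(\<Sum>i<n. (X i \<omega> - sample_mean X n \<omega>)\<^sup>2) = \<sigma>\<^sup>2 * Q"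
  proof -
    have "(\<Sum>i<n. (X i \<omega> - sample_mean X n \<omega>)\<^sup>2) = (\<Sum>i<n. \<sigma>\<^sup>2 * (z i - T / real n)\<^sup>2)"
    proof (intro sum.cong refl)
      fix i
      have "X i \<omega> - sample_mean X n \<omega> = \<sigma> * (z i - T / real n)"
        unfolding mean using xz[of i] by (simp add: x_def algebra_simps)
      then show "(X i \<omega> - sample_mean X n \<omega>)\<^sup>2 = \<sigma>\<^sup>2 * (z i - T / real n)\<^sup>2"
        by (simp add: power_mult_distrib)
    qed
    also have "\<dots> = \<sigma>\<^sup>2 * Q"
      unfolding Q_def Qz_alt[OF n0] sum_distrib_left[symmetric] z_def T_def ..
    finally show ?thesis .
  qed
  have Q0: "0 \<le> Q" unfolding Q_def by (rule Qz_nonneg[OF n0])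
  have var: "sample_var X n \<omega> = \<sigma>\<^sup>2 * Q / (real n - 1)"
    unfolding sample_var_def ssq ..
  have var0: "0 \<le> sample_var X n \<omega>" unfolding var using Q0 rn by simp
  have "(t_stat X n \<mu> \<omega>)\<^sup>2 = (sqrt (real n))\<^sup>2 * (sample_mean X n \<omega> - \<mu>)\<^sup>2 / (sqrt (sample_var X n \<omega>))\<^sup>2"
    unfolding t_stat_def by (simp add: power_divide power_mult_distrib)
  also have "\<dots> = real n * (\<sigma> * T / real n)\<^sup>2 / (\<sigma>\<^sup>2 * Q / (real n - 1))"
    using var0 unfolding mean var by simp
  finally have t2: "(t_stat X n \<mu> \<omega>)\<^sup>2 = real n * (\<sigma> * T / real n)\<^sup>2 / (\<sigma>\<^sup>2 * Q / (real n - 1))" .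
  have "(t_stat X n \<mu> \<omega>)\<^sup>2 / (real n - 1) = T\<^sup>2 / (real n * Q)"
  proof (cases "Q = 0")
    case True
    then show ?thesis unfolding t2 by simp
  next
    case False
    then show ?thesis unfolding t2 using s rn n0 by (simp add: field_simps power2_eq_square)
  qed
  then show ?thesis unfolding U_stat_def T_def Q_def x_def by simp
qed

definition Ufun :: "nat \<Rightarrow> real \<Rightarrow> real \<Rightarrow> (nat \<Rightarrow> real) \<Rightarrow> real" where
  "Ufun n \<mu> \<sigma> x = real n * ln (1 + (Tz \<mu> \<sigma> n x)\<^sup>2 / (real n * Qz \<mu> \<sigma> n x))"

lemma Ufun_meas[measurable]: "Ufun n \<mu> \<sigma> \<in> borel_measurable (PiM {..<n} (\<lambda>_. NM \<mu>' \<sigma>'))"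
proof -
  have [measurable]: "Tz \<mu> \<sigma> n \<in> borel_measurable (PiM {..<n} (\<lambda>_. NM \<mu>' \<sigma>'))"
    by (rule Tz_measurable) simp
  have [measurable]: "Qz \<mu> \<sigma> n \<in> borel_measurable (PiM {..<n} (\<lambda>_. NM \<mu>' \<sigma>'))"
    by (rule Qz_measurable) simp
  show ?thesis unfolding Ufun_def[abs_def] by measurable
qed

lemma U_Ufun:
  assumes n: "2 \<le> n" and s: "0 < \<sigma>"
  shows "U_stat X n \<mu> \<omega> = Ufun n \<mu> \<sigma> (\<lambda>i\<in>{..<n}. X i \<omega>)"
  unfolding Ufun_def U_eq[OF n s] Tz_restrict Qz_restrict ..

lemma U_nonneg:
  assumes n: "2 \<le> n"
  shows "0 \<le> U_stat X n \<mu> \<omega>"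
  unfolding U_stat_def using n by simp

lemma iid_distr:
  assumes iid: "iid_normal M X n \<mu> \<sigma>" and s: "0 < \<sigma>" and n: "1 \<le> n"
  shows "distr M (PiM {..<n} (\<lambda>_. NM \<mu> \<sigma>)) (\<lambda>\<omega>. \<lambda>i\<in>{..<n}. X i \<omega>) = PiM {..<n} (\<lambda>_. NM \<mu> \<sigma>)"
    and "(\<lambda>\<omega>. \<lambda>i\<in>{..<n}. X i \<omega>) \<in> measurable M (PiM {..<n} (\<lambda>_. NM \<mu> \<sigma>))"
    and "\<And>i. i < n \<Longrightarrow> X i \<in> borel_measurable M"
proof -
  have ps: "prob_space M" and ind: "prob_space.indep_vars M (\<lambda>_. borel) X {..<n}"
    and d: "\<And>i. i < n \<Longrightarrow> distributed M lborel (X i) (\<lambda>x. ennreal (normal_density \<mu> \<sigma> x))"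
    using iid unfolding iid_normal_def by auto
  interpret prob_space M by (rule ps)
  have rv: "X i \<in> borel_measurable M" if "i < n" for i
  proof -
    have "X i \<in> measurable M lborel" using d[OF that] unfolding distributed_def by auto
    then show ?thesis by (simp add: measurable_def)
  qed
  show "\<And>i. i < n \<Longrightarrow> X i \<in> borel_measurable M" by (rule rv)
  have de: "distr M borel (X i) = NM \<mu> \<sigma>" if "i < n" for i
  proof -
    have "distr M lborel (X i) = density lborel (\<lambda>x. ennreal (normal_density \<mu> \<sigma> x))"
      using d[OF that] unfolding distributed_def by auto
    moreover have "distr M borel (X i) = distr M lborel (X i)" by (rule distr_cong) auto
    ultimately show ?thesis unfolding NM_def by simp
  qed
  have "0 \<in> {..<n}" using n by simp
  then have ne: "{..<n} \<noteq> {}" by auto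
  have "distr M (PiM {..<n} (\<lambda>_. borel)) (\<lambda>\<omega>. \<lambda>i\<in>{..<n}. X i \<omega>) = (PiM {..<n} (\<lambda>i. distr M borel (X i)))"
    using ind by (subst (asm) indep_vars_iff_distr_eq_PiM'[OF ne]) (auto intro: rv)
  also have "\<dots> = PiM {..<n} (\<lambda>_. NM \<mu> \<sigma>)" by (rule PiM_cong) (auto simp: de)
  finally have e1: "distr M (PiM {..<n} (\<lambda>_. borel)) (\<lambda>\<omega>. \<lambda>i\<in>{..<n}. X i \<omega>) = PiM {..<n} (\<lambda>_. NM \<mu> \<sigma>)" .
  have "distr M (PiM {..<n} (\<lambda>_. NM \<mu> \<sigma>)) (\<lambda>\<omega>. \<lambda>i\<in>{..<n}. X i \<omega>) = distr M (PiM {..<n} (\<lambda>_. borel)) (\<lambda>\<omega>. \<lambda>i\<in>{..<n}. X i \<omega>)"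
    by (rule distr_cong) (auto intro!: sets_PiM_cong)
  then show "distr M (PiM {..<n} (\<lambda>_. NM \<mu> \<sigma>)) (\<lambda>\<omega>. \<lambda>i\<in>{..<n}. X i \<omega>) = PiM {..<n} (\<lambda>_. NM \<mu> \<sigma>)"
    using e1 by simp
  show "(\<lambda>\<omega>. \<lambda>i\<in>{..<n}. X i \<omega>) \<in> measurable M (PiM {..<n} (\<lambda>_. NM \<mu> \<sigma>))"
  proof (rule measurable_restrict)
    fix i assume "i \<in> {..<n}"
    then have "X i \<in> borel_measurable M" using rv by simp
    moreover have "measurable M (NM \<mu> \<sigma>) = measurable M borel" by (rule measurable_cong_sets) auto
    ultimately show "X i \<in> measurable M (NM \<mu> \<sigma>)" by simp
  qed
qed

lemma moment_nn:
  assumes iid: "iid_normal M X n \<mu> \<sigma>" and s: "0 < \<sigma>" and n: "2 \<le> n"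
  shows "(\<integral>\<^sup>+\<omega>. ennreal (U_stat X n \<mu> \<omega> ^ p) \<partial>M)
     = ennreal (real n ^ p / Beta ((real n - 1) / 2) (1 / 2) * IJ (1 / 2) (real n / 2) p)"
proof -
  define a where "a = (real n - 1) / 2"
  define b :: real where "b = 1 / 2"
  define c where "c = real n / 2"
  have a: "0 < a" and b: "0 < b" and bc: "b < c" and abc: "a + b = c"
    using n by (auto simp: a_def b_def c_def field_simps)
  note iidd = iid_distr[OF iid s]
  have m1: "(\<lambda>\<omega>. \<lambda>i\<in>{..<n}. X i \<omega>) \<in> measurable M (PiM {..<n} (\<lambda>_. NM \<mu> \<sigma>))"
    using iidd(2) n by simp
  have "(\<integral>\<^sup>+\<omega>. ennreal (U_stat X n \<mu> \<omega> ^ p) \<partial>M) = (\<integral>\<^sup>+\<omega>. (\<lambda>x. ennreal (Ufun n \<mu> \<sigma> x ^ p)) (\<lambda>i\<in>{..<n}. X i \<omega>) \<partial>M)"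
    by (simp add: U_Ufun[OF n s])
  also have "\<dots> = (\<integral>\<^sup>+x. ennreal (Ufun n \<mu> \<sigma> x ^ p) \<partial>distr M (PiM {..<n} (\<lambda>_. NM \<mu> \<sigma>)) (\<lambda>\<omega>. \<lambda>i\<in>{..<n}. X i \<omega>))"
    by (rule nn_integral_distr[symmetric, OF m1]) measurable
  also have "\<dots> = (\<integral>\<^sup>+x. ennreal (Ufun n \<mu> \<sigma> x ^ p) \<partial>PiM {..<n} (\<lambda>_. NM \<mu> \<sigma>))"
    using iidd(1) n by simp
  also have "\<dots> = (\<integral>\<^sup>+x. (\<lambda>w. ennreal ((real n * ln (1 + w)) ^ p)) ((Tz \<mu> \<sigma> n x)\<^sup>2 / (real n * Qz \<mu> \<sigma> n x)) \<partial>PiM {..<n} (\<lambda>_. NM \<mu> \<sigma>))"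
    unfolding Ufun_def ..
  also have "\<dots> = (\<integral>\<^sup>+w. ennreal (bp a b w) * ennreal ((real n * ln (1 + w)) ^ p) \<partial>lborel)"
    unfolding a_def b_def by (rule final_nn[OF n s]) measurable
  also have "\<dots> = (\<integral>\<^sup>+w. ennreal (real n ^ p / Beta a b * (ln (1 + w) ^ p * fw b c w)) \<partial>lborel)"
  proof (rule nn_integral_cong)
    fix w :: real
    have "bp a b w * (real n * ln (1 + w)) ^ p = real n ^ p / Beta a b * (ln (1 + w) ^ p * fw b c w)"
      using bp_fw[OF a b, of w] Beta_pos[OF a b] unfolding abc by (simp add: power_mult_distrib field_simps)
    moreover have "0 \<le> bp a b w" unfolding bp_def using Beta_pos[OF a b] by simp
    ultimately show "ennreal (bp a b w) * ennreal ((real n * ln (1 + w)) ^ p) = ennreal (real n ^ p / Beta a b * (ln (1 + w) ^ p * fw b c w))"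
      by (simp add: ennreal_mult'[symmetric])
  qed
  also have "\<dots> = ennreal (real n ^ p / Beta a b * IJ b c p)"
  proof -
    have int: "integrable lborel (\<lambda>w. real n ^ p / Beta a b * (ln (1 + w) ^ p * fw b c w))"
      by (rule integrable_mult_right) (rule lnp_fw_int[OF b bc])
    have nn: "0 \<le> real n ^ p / Beta a b * (ln (1 + w) ^ p * fw b c w)" for w
      using Beta_pos[OF a b] fw_nonneg[of b c w] by (cases "0 < w") (auto simp: fw_def)
    have "(\<integral>\<^sup>+w. ennreal (real n ^ p / Beta a b * (ln (1 + w) ^ p * fw b c w)) \<partial>lborel)
        = ennreal (\<integral>w. real n ^ p / Beta a b * (ln (1 + w) ^ p * fw b c w) \<partial>lborel)"
      by (rule nn_integral_eq_integral[OF int]) (intro AE_I2 nn)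
    also have "(\<integral>w. real n ^ p / Beta a b * (ln (1 + w) ^ p * fw b c w) \<partial>lborel) = real n ^ p / Beta a b * IJ b c p"
      unfolding IJ_def by (rule integral_mult_right_zero)
    finally show ?thesis .
  qed
  finally show ?thesis unfolding a_def b_def c_def .
qed

lemma Dig_deriv_at:
  assumes "0 < t"
  shows "(Digamma has_real_derivative Polygamma 1 t) (at t)"
  using has_field_derivative_Polygamma[OF pos_not_nonpos[OF assms], of 0 UNIV] by simp

lemma Trig_deriv_at:
  assumes "0 < t"
  shows "(Polygamma 1 has_real_derivative Polygamma 2 t) (at t)"
  using has_field_derivative_Polygamma[OF pos_not_nonpos[OF assms], of 1 UNIV] by (simp add: numeral_2_eq_2)

lemma deriv_Dfun:
  assumes x: "0 < x"
  shows "deriv Dfun x = (Polygamma 1 ((x + 1) / 2) - Polygamma 1 (x / 2)) / 2"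
proof -
  have i1: "((\<lambda>x. (x + 1) / 2) has_real_derivative 1 / 2) (at x)" by (auto intro!: derivative_eq_intros)
  have i2: "((\<lambda>x. x / 2) has_real_derivative 1 / 2) (at x)" by (auto intro!: derivative_eq_intros)
  have d1: "((\<lambda>x. Digamma ((x + 1) / 2)) has_real_derivative Polygamma 1 ((x + 1) / 2) * (1 / 2)) (at x)"
    by (rule DERIV_chain2[OF Dig_deriv_at i1]) (use x in simp)
  have d2: "((\<lambda>x. Digamma (x / 2)) has_real_derivative Polygamma 1 (x / 2) * (1 / 2)) (at x)"
    by (rule DERIV_chain2[OF Dig_deriv_at i2]) (use x in simp)
  have "(Dfun has_real_derivative Polygamma 1 ((x + 1) / 2) * (1 / 2) - Polygamma 1 (x / 2) * (1 / 2)) (at x)"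
    unfolding Dfun_def[abs_def] by (rule DERIV_diff[OF d1 d2])
  then show ?thesis by (simp add: DERIV_imp_deriv field_simps)
qed

lemma m1_val:
  assumes n: "2 \<le> n"
  shows "real n ^ 1 / Beta ((real n - 1) / 2) (1 / 2) * IJ (1 / 2) (real n / 2) 1 = m1 n"
proof -
  have b: "(0::real) < 1 / 2" by simp
  have bc: "1 / 2 < real n / 2" using n by simp
  have e: "real n / 2 - 1 / 2 = (real n - 1) / 2" by (simp add: field_simps)
  have B: "0 < Beta ((real n - 1) / 2) (1 / 2)" using n by (intro Beta_pos) auto
  show ?thesis unfolding IJ1[OF b bc] Bf_Beta e m1_def Dfun_def using B by (simp add: field_simps)
qed

lemma m2_val:
  assumes n: "2 \<le> n"
  shows "real n ^ 2 / Beta ((real n - 1) / 2) (1 / 2) * IJ (1 / 2) (real n / 2) 2 = m2 n"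
proof -
  have b: "(0::real) < 1 / 2" by simp
  have bc: "1 / 2 < real n / 2" using n by simp
  have e: "real n / 2 - 1 / 2 = (real n - 1) / 2" by (simp add: field_simps)
  have e2: "(real n - 1 + 1) / 2 = real n / 2" by simp
  have B: "0 < Beta ((real n - 1) / 2) (1 / 2)" using n by (intro Beta_pos) auto
  have dD: "deriv Dfun (real n - 1) = (Polygamma 1 (real n / 2) - Polygamma 1 ((real n - 1) / 2)) / 2"
    using deriv_Dfun[of "real n - 1"] n by (simp add: e2)
  show ?thesis unfolding IJ2[OF b bc] Bf_Beta e m2_def dD Dfun_def e2 using B by (simp add: field_simps)
qed

lemma IJ_nonneg: "0 \<le> IJ b c p" if "0 < b" "b < c"
  unfolding IJ_def by (intro Bochner_Integration.integral_nonneg) (auto simp: fw_def)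

lemma part_a:
  assumes iid: "iid_normal M X n \<mu> \<sigma>" and s: "0 < \<sigma>" and n: "2 \<le> n"
  shows "integrable M (U_stat X n \<mu>) \<and>
            integrable M (\<lambda>\<omega>. (U_stat X n \<mu> \<omega>)\<^sup>2) \<and>
            (LINT \<omega>|M. U_stat X n \<mu> \<omega>) = m1 n \<and>
            (LINT \<omega>|M. (U_stat X n \<mu> \<omega> - (LINT \<omega>'|M. U_stat X n \<mu> \<omega>'))\<^sup>2) = m2 n - (m1 n)\<^sup>2"
proof -
  have ps: "prob_space M" using iid unfolding iid_normal_def by auto
  interpret prob_space M by (rule ps)
  note iidd = iid_distr[OF iid s]
  have meas: "U_stat X n \<mu> \<in> borel_measurable M"
  proof -
    have "(\<lambda>\<omega>. Ufun n \<mu> \<sigma> (\<lambda>i\<in>{..<n}. X i \<omega>)) \<in> borel_measurable M"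
      using measurable_compose[OF iidd(2) Ufun_meas] n by simp
    moreover have "U_stat X n \<mu> = (\<lambda>\<omega>. Ufun n \<mu> \<sigma> (\<lambda>i\<in>{..<n}. X i \<omega>))"
      by (rule ext) (rule U_Ufun[OF n s])
    ultimately show ?thesis by simp
  qed
  have b: "(0::real) < 1 / 2" by simp
  have bc: "1 / 2 < real n / 2" using n by simp
  have B: "0 < Beta ((real n - 1) / 2) (1 / 2)" using n by (intro Beta_pos) auto
  have nn: "0 \<le> real n ^ p / Beta ((real n - 1) / 2) (1 / 2) * IJ (1 / 2) (real n / 2) p" for p
    using B IJ_nonneg[OF b bc, of p] by simp
  have mom1: "(\<integral>\<^sup>+\<omega>. ennreal (U_stat X n \<mu> \<omega> ^ 1) \<partial>M) = ennreal (m1 n)"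
    using moment_nn[OF iid s n, of 1] unfolding m1_val[OF n] .
  have mom2: "(\<integral>\<^sup>+\<omega>. ennreal (U_stat X n \<mu> \<omega> ^ 2) \<partial>M) = ennreal (m2 n)"
    using moment_nn[OF iid s n, of 2] unfolding m2_val[OF n] .
  have z1: "0 \<le> m1 n" using nn[of 1] unfolding m1_val[OF n] .
  have z2: "0 \<le> m2 n" using nn[of 2] unfolding m2_val[OF n] .
  have mp: "(\<lambda>\<omega>. U_stat X n \<mu> \<omega> ^ p) \<in> borel_measurable M" for p
    using meas by measurable
  have ap: "AE \<omega> in M. 0 \<le> U_stat X n \<mu> \<omega> ^ p" for p
    by (intro AE_I2 zero_le_power U_nonneg[OF n])
  have E1: "integrable M (\<lambda>\<omega>. U_stat X n \<mu> \<omega> ^ 1) \<and> (LINT \<omega>|M. U_stat X n \<mu> \<omega> ^ 1) = m1 n"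
    using nn_integral_eq_integrable[OF mp ap z1] mom1 by blast
  have E2: "integrable M (\<lambda>\<omega>. U_stat X n \<mu> \<omega> ^ 2) \<and> (LINT \<omega>|M. U_stat X n \<mu> \<omega> ^ 2) = m2 n"
    using nn_integral_eq_integrable[OF mp ap z2] mom2 by blast
  have i1: "integrable M (U_stat X n \<mu>)" and e1: "(LINT \<omega>|M. U_stat X n \<mu> \<omega>) = m1 n" using E1 by auto
  have i2: "integrable M (\<lambda>\<omega>. (U_stat X n \<mu> \<omega>)\<^sup>2)" and e2: "(LINT \<omega>|M. (U_stat X n \<mu> \<omega>)\<^sup>2) = m2 n" using E2 by auto
  have "(LINT \<omega>|M. (U_stat X n \<mu> \<omega> - m1 n)\<^sup>2) = (LINT \<omega>|M. (U_stat X n \<mu> \<omega>)\<^sup>2 - 2 * m1 n * U_stat X n \<mu> \<omega> + (m1 n)\<^sup>2)"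
    by (intro Bochner_Integration.integral_cong) (auto simp: power2_diff)
  also have "\<dots> = (LINT \<omega>|M. (U_stat X n \<mu> \<omega>)\<^sup>2) - 2 * m1 n * (LINT \<omega>|M. U_stat X n \<mu> \<omega>) + (m1 n)\<^sup>2"
    using i1 i2 prob_space by (simp add: Bochner_Integration.integral_add Bochner_Integration.integral_diff)
  also have "\<dots> = m2 n - (m1 n)\<^sup>2" unfolding e1 e2 by (simp add: power2_eq_square)
  finally show ?thesis using i1 i2 e1 by simp
qed

lemma half_concave:
  fixes f f' :: "real \<Rightarrow> real" and x :: real
  assumes x: "0 < x"
    and D: "\<And>t. 0 < t \<Longrightarrow> (f has_real_derivative f' t) (at t)"
    and dec: "\<And>s t. 0 < s \<Longrightarrow> s < t \<Longrightarrow> f' t < f' s"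
  shows "f (x + 1) - f (x + 1 / 2) \<le> f (x + 1 / 2) - f x"
proof -
  have "\<exists>z. x < z \<and> z < x + 1 / 2 \<and> f (x + 1 / 2) - f x = (x + 1 / 2 - x) * f' z"
    by (rule MVT2) (use x D in auto)
  then obtain z1 where z1: "x < z1" "z1 < x + 1 / 2" "f (x + 1 / 2) - f x = (x + 1 / 2 - x) * f' z1" by blast
  have "\<exists>z. x + 1 / 2 < z \<and> z < x + 1 \<and> f (x + 1) - f (x + 1 / 2) = (x + 1 - (x + 1 / 2)) * f' z"
    by (rule MVT2) (use x D in auto)
  then obtain z2 where z2: "x + 1 / 2 < z2" "z2 < x + 1" "f (x + 1) - f (x + 1 / 2) = (x + 1 - (x + 1 / 2)) * f' z2" by blast
  have "f' z2 < f' z1" using z1 z2 x by (intro dec) auto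
  then show ?thesis using z1(3) z2(3) by simp
qed

lemma half_le: "2 * a \<le> b \<Longrightarrow> a \<le> b / (2::real)"
  by simp

definition dd :: "real \<Rightarrow> real" where "dd x = Digamma (x + 1 / 2) - Digamma x"
definition ee :: "real \<Rightarrow> real" where "ee x = Polygamma 1 x - Polygamma 1 (x + 1 / 2)"

lemma dd_sum: "0 < x \<Longrightarrow> dd x + dd (x + 1 / 2) = 1 / x"
  unfolding dd_def using Digamma_plus1[of x] by (simp add: add.assoc)

lemma ee_sum: "0 < x \<Longrightarrow> ee x + ee (x + 1 / 2) = 1 / x\<^sup>2"
  unfolding ee_def using Polygamma_plus1[of x 1] by (simp add: add.assoc power2_eq_square)

lemma dd_mono: "0 < x \<Longrightarrow> dd (x + 1 / 2) \<le> dd x"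
  unfolding dd_def
  using half_concave[of x Digamma "Polygamma 1"] Dig_deriv_at
    Polygamma_real_strict_antimono[of _ _ 1]
  by (simp add: add.assoc)

lemma ee_mono: "0 < x \<Longrightarrow> ee (x + 1 / 2) \<le> ee x"
proof -
  assume x: "0 < x"
  have D: "((\<lambda>t. - Polygamma 1 t) has_real_derivative - Polygamma 2 t) (at t)" if "0 < t" for t
    using DERIV_minus[OF Trig_deriv_at[OF that]] .
  have dec: "- Polygamma 2 t < - Polygamma 2 s" if "0 < s" "s < t" for s t :: real
    using Polygamma_real_strict_mono[OF that, of 2] by simp
  show ?thesis unfolding ee_def using half_concave[of x "\<lambda>t. - Polygamma 1 t" "\<lambda>t. - Polygamma 2 t", OF x D dec]
    by (simp add: add.assoc)
qed

lemma dd_bounds: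
  assumes x: "1 / 2 < x"
  shows "1 / (2 * x) \<le> dd x" "dd x \<le> 1 / (2 * x - 1)"
proof -
  have x0: "0 < x" using x by simp
  have "1 / x \<le> 2 * dd x" using dd_sum[OF x0] dd_mono[OF x0] by linarith
  moreover have "1 / (2 * x) = (1 / x) / 2" by simp
  ultimately show "1 / (2 * x) \<le> dd x" by linarith
  define y where "y = x - 1 / 2"
  have y: "0 < y" and xy: "x = y + 1 / 2" using x by (auto simp: y_def)
  have "2 * dd x \<le> 1 / y" using dd_sum[OF y] dd_mono[OF y] unfolding xy by linarith
  then have "dd x \<le> (1 / y) / 2" by (rule half_le)
  moreover have "1 / (2 * x - 1) = (1 / y) / 2" unfolding xy by simp
  ultimately show "dd x \<le> 1 / (2 * x - 1)" by simp
qed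

lemma ee_bounds:
  assumes x: "1 / 2 < x"
  shows "1 / (2 * x\<^sup>2) \<le> ee x" "ee x \<le> 1 / (2 * (x - 1 / 2)\<^sup>2)"
proof -
  have x0: "0 < x" using x by simp
  have "1 / x\<^sup>2 \<le> 2 * ee x" using ee_sum[OF x0] ee_mono[OF x0] by linarith
  moreover have "1 / (2 * x\<^sup>2) = (1 / x\<^sup>2) / 2" by simp
  ultimately show "1 / (2 * x\<^sup>2) \<le> ee x" by linarith
  define y where "y = x - 1 / 2"
  have y: "0 < y" and xy: "x = y + 1 / 2" using x by (auto simp: y_def)
  have "2 * ee x \<le> 1 / y\<^sup>2" using ee_sum[OF y] ee_mono[OF y] unfolding xy by linarith
  then have "ee x \<le> (1 / y\<^sup>2) / 2" by (rule half_le)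
  moreover have "1 / (2 * (x - 1 / 2)\<^sup>2) = (1 / y\<^sup>2) / 2" unfolding xy by simp
  ultimately show "ee x \<le> 1 / (2 * (x - 1 / 2)\<^sup>2)" by simp
qed

lemma m1_dd: "2 \<le> n \<Longrightarrow> m1 n = real n * dd ((real n - 1) / 2)"
  unfolding m1_def Dfun_def dd_def by (simp add: field_simps)

lemma var_ee: "2 \<le> n \<Longrightarrow> m2 n - (m1 n)\<^sup>2 = (real n)\<^sup>2 * ee ((real n - 1) / 2)"
proof -
  assume n: "2 \<le> n"
  have e2: "(real n - 1 + 1) / 2 = real n / 2" by simp
  have e3: "(real n - 1) / 2 + 1 / 2 = real n / 2" by (simp add: field_simps)
  have dD: "deriv Dfun (real n - 1) = (Polygamma 1 (real n / 2) - Polygamma 1 ((real n - 1) / 2)) / 2"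
    using deriv_Dfun[of "real n - 1"] n by (simp add: e2)
  show ?thesis unfolding m2_def m1_def dD ee_def e3 by (simp add: power_mult_distrib field_simps)
qed

lemma lim_m1: "(\<lambda>n. m1 n) \<longlonglongrightarrow> 1"
proof (rule tendsto_sandwich[of "\<lambda>n. real n / (real n - 1)" _ _ "\<lambda>n. real n / (real n - 2)"])
  show "\<forall>\<^sub>F n in sequentially. real n / (real n - 1) \<le> m1 n"
    using eventually_ge_at_top[of "3::nat"]
  proof eventually_elim
    case (elim n)
    have x: "1 / 2 < (real n - 1) / 2" using elim by simp
    have "real n * (1 / (2 * ((real n - 1) / 2))) \<le> real n * dd ((real n - 1) / 2)"
      by (rule mult_left_mono[OF dd_bounds(1)[OF x]]) simp
    moreover have "real n * (1 / (2 * ((real n - 1) / 2))) = real n / (real n - 1)"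
      using elim by (simp add: field_simps)
    ultimately show ?case using elim by (simp add: m1_dd)
  qed
  show "\<forall>\<^sub>F n in sequentially. m1 n \<le> real n / (real n - 2)"
    using eventually_ge_at_top[of "3::nat"]
  proof eventually_elim
    case (elim n)
    have x: "1 / 2 < (real n - 1) / 2" using elim by simp
    have le: "real n * dd ((real n - 1) / 2) \<le> real n * (1 / (2 * ((real n - 1) / 2) - 1))"
      by (rule mult_left_mono[OF dd_bounds(2)[OF x]]) simp
    have eq: "2 * ((real n - 1) / 2) - 1 = real n - 2" by (simp add: field_simps)
    from le have "real n * dd ((real n - 1) / 2) \<le> real n * (1 / (real n - 2))" unfolding eq .
    then show ?case using elim by (simp add: m1_dd)
  qed
  show "(\<lambda>n. real n / (real n - 1)) \<longlonglongrightarrow> 1" by real_asymp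
  show "(\<lambda>n. real n / (real n - 2)) \<longlonglongrightarrow> 1" by real_asymp
qed

lemma lim_var: "(\<lambda>n. m2 n - (m1 n)\<^sup>2) \<longlonglongrightarrow> 2"
proof (rule tendsto_sandwich[of "\<lambda>n. 2 * (real n)\<^sup>2 / (real n - 1)\<^sup>2" _ _ "\<lambda>n. 2 * (real n)\<^sup>2 / (real n - 2)\<^sup>2"])
  show "\<forall>\<^sub>F n in sequentially. 2 * (real n)\<^sup>2 / (real n - 1)\<^sup>2 \<le> m2 n - (m1 n)\<^sup>2"
    using eventually_ge_at_top[of "3::nat"]
  proof eventually_elim
    case (elim n)
    have x: "1 / 2 < (real n - 1) / 2" using elim by simp
    have "(real n)\<^sup>2 * (1 / (2 * ((real n - 1) / 2)\<^sup>2)) \<le> (real n)\<^sup>2 * ee ((real n - 1) / 2)"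
      by (rule mult_left_mono[OF ee_bounds(1)[OF x]]) simp
    moreover have "(real n)\<^sup>2 * (1 / (2 * ((real n - 1) / 2)\<^sup>2)) = 2 * (real n)\<^sup>2 / (real n - 1)\<^sup>2"
      by (simp add: power_divide field_simps)
    ultimately show ?case using elim by (simp add: var_ee)
  qed
  show "\<forall>\<^sub>F n in sequentially. m2 n - (m1 n)\<^sup>2 \<le> 2 * (real n)\<^sup>2 / (real n - 2)\<^sup>2"
    using eventually_ge_at_top[of "3::nat"]
  proof eventually_elim
    case (elim n)
    have x: "1 / 2 < (real n - 1) / 2" using elim by simp
    have "(real n)\<^sup>2 * ee ((real n - 1) / 2) \<le> (real n)\<^sup>2 * (1 / (2 * ((real n - 1) / 2 - 1 / 2)\<^sup>2))"
      by (rule mult_left_mono[OF ee_bounds(2)[OF x]]) simp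
    moreover have "(real n)\<^sup>2 * (1 / (2 * ((real n - 1) / 2 - 1 / 2)\<^sup>2)) = 2 * (real n)\<^sup>2 / (real n - 2)\<^sup>2"
    proof -
      have h: "(real n - 1) / 2 - 1 / 2 = (real n - 2) / 2" by (simp add: field_simps)
      have nz: "real n - 2 \<noteq> 0" using elim by simp
      show ?thesis unfolding h using nz by (simp add: power_divide field_simps)
    qed
    ultimately show ?case using elim by (simp add: var_ee)
  qed
  show "(\<lambda>n. 2 * (real n)\<^sup>2 / (real n - 1)\<^sup>2) \<longlonglongrightarrow> 2" by real_asymp
  show "(\<lambda>n. 2 * (real n)\<^sup>2 / (real n - 2)\<^sup>2) \<longlonglongrightarrow> 2" by real_asymp
qed

theorem lemma1:
  fixes \<mu>0 \<sigma> :: real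
  assumes "\<sigma> > 0"
  shows "(\<forall>n\<ge>2. \<forall>(M :: 'a measure) X. iid_normal M X n \<mu>0 \<sigma> \<longrightarrow>
            integrable M (U_stat X n \<mu>0) \<and>
            integrable M (\<lambda>\<omega>. (U_stat X n \<mu>0 \<omega>)\<^sup>2) \<and>
            (LINT \<omega>|M. U_stat X n \<mu>0 \<omega>) = m1 n \<and>
            (LINT \<omega>|M. (U_stat X n \<mu>0 \<omega> - (LINT \<omega>'|M. U_stat X n \<mu>0 \<omega>'))\<^sup>2) = m2 n - (m1 n)\<^sup>2)
       \<and> (\<forall>(M :: nat \<Rightarrow> 'a measure) (X :: nat \<Rightarrow> nat \<Rightarrow> 'a \<Rightarrow> real).
            (\<forall>n\<ge>2. iid_normal (M n) (X n) n \<mu>0 \<sigma>) \<longrightarrow>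
            ((\<lambda>n. LINT \<omega>|M n. U_stat (X n) n \<mu>0 \<omega>) \<longlonglongrightarrow> 1) \<and>
            ((\<lambda>n. LINT \<omega>|M n. (U_stat (X n) n \<mu>0 \<omega> - (LINT \<omega>'|M n. U_stat (X n) n \<mu>0 \<omega>'))\<^sup>2) \<longlonglongrightarrow> 2))"
proof (intro conjI allI impI)
  fix n :: nat and M :: "'a measure" and X
  assume "2 \<le> n" "iid_normal M X n \<mu>0 \<sigma>"
  note pa = part_a[OF this(2) assms this(1)]
  show "integrable M (U_stat X n \<mu>0)" using pa by blast
  show "integrable M (\<lambda>\<omega>. (U_stat X n \<mu>0 \<omega>)\<^sup>2)" using pa by blast
  show "(LINT \<omega>|M. U_stat X n \<mu>0 \<omega>) = m1 n" using pa by blast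
  show "(LINT \<omega>|M. (U_stat X n \<mu>0 \<omega> - (LINT \<omega>'|M. U_stat X n \<mu>0 \<omega>'))\<^sup>2) = m2 n - (m1 n)\<^sup>2" using pa by blast
next
  fix M :: "nat \<Rightarrow> 'a measure" and X :: "nat \<Rightarrow> nat \<Rightarrow> 'a \<Rightarrow> real"
  assume iid: "\<forall>n\<ge>2. iid_normal (M n) (X n) n \<mu>0 \<sigma>"
  show "(\<lambda>n. LINT \<omega>|M n. U_stat (X n) n \<mu>0 \<omega>) \<longlonglongrightarrow> 1"
  proof -
    have "\<forall>\<^sub>F n in sequentially. m1 n = (LINT \<omega>|M n. U_stat (X n) n \<mu>0 \<omega>)"
      using eventually_ge_at_top[of "2::nat"]
      by eventually_elim (use part_a iid assms in force)
    then show ?thesis by (rule Lim_transform_eventually[OF lim_m1])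
  qed
  show "(\<lambda>n. LINT \<omega>|M n. (U_stat (X n) n \<mu>0 \<omega> - (LINT \<omega>'|M n. U_stat (X n) n \<mu>0 \<omega>'))\<^sup>2) \<longlonglongrightarrow> 2"
  proof -
    have "\<forall>\<^sub>F n in sequentially. m2 n - (m1 n)\<^sup>2 = (LINT \<omega>|M n. (U_stat (X n) n \<mu>0 \<omega> - (LINT \<omega>'|M n. U_stat (X n) n \<mu>0 \<omega>'))\<^sup>2)"
      using eventually_ge_at_top[of "2::nat"]
      by eventually_elim (use part_a iid assms in force)
    then show ?thesis by (rule Lim_transform_eventually[OF lim_var])
  qed
qed

end
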